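(* Let $M\in\mathbf{F}_q[t]$ have degree $d\ge1$, $\chi$ a non-trivial Dirichlet character mod $M$ and $k\ge2$. Then for $n\ge2$, $$\sum_{n_1+n_2=n}Z_{k-1}(n_1,\chi)Z_1(n_2,\chi)=\frac{(-1)^kk}{(k-1)!}\Bigg\{\sum_{j=1}^{d_\chi}m_j(\chi)^k\frac{\alpha_j(\chi)^n(\log n)^{k-1}}n+O\Big(d^k\Big(k+\frac1{\gamma(\chi)}\Big)\frac{q^{n/2}(\log n)^{k-2}}n\Big)\Bigg\},$$ with an absolute implied constant.
   Context: For $\chi\ne\chi_0$ mod $M$, $\mathcal{L}(u,\chi)$ (with $\mathcal{L}(q^{-s},\chi)=\sum_{a\text{ monic}}\chi(a)q^{-s\deg a}$) is a polynomial of degree $\le d-1$; let $\alpha_j(\chi)=\sqrt qe^{i\gamma_j(\chi)}$, $\gamma_j(\chi)\in(-\pi,\pi)\setminus\{0\}$, $1\le j\le d_\chi$, be its distinct non-real inverse zeros of absolute value $\sqrt q$, with multiplicities $m_j(\chi)$. $\gamma(\chi)=\min_{1\le i\ne j\le d_\chi}\{|\gamma_i(\chi)-\gamma_j(\chi)|,|\gamma_i(\chi)|,|\pi-\gamma_i(\chi)|\}$. For $\ell\ge1$, $Z_\ell(n,\chi)=\frac{(-1)^\ell}{(\ell-1)!}\sum_{j=1}^{d_\chi}m_j(\chi)^\ell\frac{\alpha_j(\chi)^n(\log n)^{\ell-1}}n$. *)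

theory Defs
  imports "HOL-Complex_Analysis.Complex_Analysis" "HOL-Algebra.Polynomial_Divisibility"
begin

text \<open>The base field F_q is a finite field R in the sense of HOL-Algebra; polynomials
  over it are the elements of poly_ring R (normalised coefficient lists, highest
  coefficient first).\<close>

definition fq_card :: "'a ring \<Rightarrow> nat" where
  "fq_card R = card (carrier R)"

definition monic_polys :: "'a ring \<Rightarrow> nat \<Rightarrow> 'a list set" where
  "monic_polys R n = {p \<in> carrier (poly_ring R). p \<noteq> [] \<and> lead_coeff p = \<one>\<^bsub>R\<^esub> \<and> degree p = n}"

definition pcoprime :: "'a ring \<Rightarrow> 'a list \<Rightarrow> 'a list \<Rightarrow> bool" where
  "pcoprime R a b \<longleftrightarrow> (\<forall>c \<in> carrier (poly_ring R).
      c pdivides\<^bsub>R\<^esub> a \<and> c pdivides\<^bsub>R\<^esub> b \<longrightarrow> c \<in> Units (poly_ring R))"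

definition dirichlet_char :: "'a ring \<Rightarrow> 'a list \<Rightarrow> ('a list \<Rightarrow> complex) \<Rightarrow> bool" where
  "dirichlet_char R M chi \<longleftrightarrow>
     (\<forall>a \<in> carrier (poly_ring R). \<forall>b \<in> carrier (poly_ring R).
        chi (mult (poly_ring R) a b) = chi a * chi b) \<and>
     (\<forall>a \<in> carrier (poly_ring R). \<forall>b \<in> carrier (poly_ring R).
        M pdivides\<^bsub>R\<^esub> (a_minus (poly_ring R) a b) \<longrightarrow> chi a = chi b) \<and>
     (\<forall>a \<in> carrier (poly_ring R). chi a \<noteq> 0 \<longleftrightarrow> pcoprime R a M)"

definition nontrivial_char :: "'a ring \<Rightarrow> 'a list \<Rightarrow> ('a list \<Rightarrow> complex) \<Rightarrow> bool" where
  "nontrivial_char R M chi \<longleftrightarrow> (\<exists>a \<in> carrier (poly_ring R). pcoprime R a M \<and> chi a \<noteq> 1)"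

definition L_coeff :: "'a ring \<Rightarrow> ('a list \<Rightarrow> complex) \<Rightarrow> nat \<Rightarrow> complex" where
  "L_coeff R chi n = (\<Sum>a \<in> monic_polys R n. chi a)"

definition Lfun :: "'a ring \<Rightarrow> ('a list \<Rightarrow> complex) \<Rightarrow> complex \<Rightarrow> complex" where
  "Lfun R chi u = (\<Sum>n. L_coeff R chi n * u ^ n)"

definition inv_zeros :: "'a ring \<Rightarrow> ('a list \<Rightarrow> complex) \<Rightarrow> complex set" where
  "inv_zeros R chi = {\<alpha>. Im \<alpha> \<noteq> 0 \<and> cmod \<alpha> = sqrt (real (fq_card R)) \<and> Lfun R chi (1 / \<alpha>) = 0}"

definition zmult :: "'a ring \<Rightarrow> ('a list \<Rightarrow> complex) \<Rightarrow> complex \<Rightarrow> nat" where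
  "zmult R chi \<alpha> = nat (zorder (Lfun R chi) (1 / \<alpha>))"

text \<open>gamma(chi); gamma_j(chi) = Arg alpha_j. Convention: value 1 if there are no such zeros
  (then both sides of the lemma vanish, so the convention is immaterial).\<close>
definition gamma_chi :: "'a ring \<Rightarrow> ('a list \<Rightarrow> complex) \<Rightarrow> real" where
  "gamma_chi R chi =
     (let Z = inv_zeros R chi;
          S = {\<bar>Arg a - Arg b\<bar> | a b. a \<in> Z \<and> b \<in> Z \<and> a \<noteq> b}
              \<union> {\<bar>Arg a\<bar> | a. a \<in> Z} \<union> {\<bar>pi - Arg a\<bar> | a. a \<in> Z}
      in if S = {} then 1 else Min S)"

definition Zfun :: "'a ring \<Rightarrow> ('a list \<Rightarrow> complex) \<Rightarrow> nat \<Rightarrow> nat \<Rightarrow> complex" where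
  "Zfun R chi l n = (-1) ^ l / of_nat (fact (l - 1)) *
     (\<Sum>\<alpha> \<in> inv_zeros R chi. of_nat (zmult R chi \<alpha>) ^ l * \<alpha> ^ n *
        of_real (ln (real n)) ^ (l - 1) / of_nat n)"

end

theory Submission
  imports Defs "HOL-Computational_Algebra.Polynomial"
begin


lemma pow_diff_bounds:
  fixes a b :: real
  assumes "0 \<le> b" "b \<le> a"
  shows "real (Suc j) * b ^ j * (a - b) \<le> a ^ Suc j - b ^ Suc j \<and>
         a ^ Suc j - b ^ Suc j \<le> real (Suc j) * a ^ j * (a - b)"
proof (induction j)
  case 0 then show ?case by simp
next
  case (Suc j)
  have e: "a ^ Suc (Suc j) - b ^ Suc (Suc j) = a * (a ^ Suc j - b ^ Suc j) + b ^ Suc j * (a - b)"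
    by (simp add: algebra_simps)
  have bj: "b ^ Suc j \<le> a ^ Suc j" using power_mono[OF assms(2) assms(1)] .
  have ab: "0 \<le> a - b" using assms by simp
  have l: "b * (real (Suc j) * b ^ j * (a - b)) \<le> a * (a ^ Suc j - b ^ Suc j)"
    using Suc.IH assms by (meson mult_mono order_trans ab mult_nonneg_nonneg of_nat_0_le_iff zero_le_power)
  have u: "a * (a ^ Suc j - b ^ Suc j) \<le> a * (real (Suc j) * a ^ j * (a - b))"
    using Suc.IH assms by (intro mult_left_mono) auto
  have u2: "b ^ Suc j * (a - b) \<le> a ^ Suc j * (a - b)" using bj ab by (rule mult_right_mono)
  show ?case
  proof
    show "real (Suc (Suc j)) * b ^ Suc j * (a - b) \<le> a ^ Suc (Suc j) - b ^ Suc (Suc j)"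
      unfolding e using l by (simp add: algebra_simps)
    show "a ^ Suc (Suc j) - b ^ Suc (Suc j) \<le> real (Suc (Suc j)) * a ^ Suc j * (a - b)"
      unfolding e using u u2 by (simp add: algebra_simps)
  qed
qed

lemma ln_step_bounds:
  assumes "m \<ge> (1::nat)"
  shows "1 / real (Suc m) \<le> ln (real (Suc m)) - ln (real m)"
    and "ln (real (Suc m)) - ln (real m) \<le> 1 / real m"
proof -
  have m0: "real m > 0" using assms by simp
  have "ln (real m / real (Suc m)) \<le> real m / real (Suc m) - 1"
    using m0 by (intro ln_le_minus_one) simp
  moreover have "ln (real m / real (Suc m)) = ln (real m) - ln (real (Suc m))"
    using m0 by (simp add: ln_div)
  moreover have "real m / real (Suc m) - 1 = - (1 / real (Suc m))"
    by (simp add: field_simps)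
  ultimately show "1 / real (Suc m) \<le> ln (real (Suc m)) - ln (real m)" by linarith
  have "ln (real (Suc m) / real m) \<le> real (Suc m) / real m - 1"
    using m0 by (intro ln_le_minus_one) simp
  moreover have "ln (real (Suc m) / real m) = ln (real (Suc m)) - ln (real m)"
    using m0 by (simp add: ln_div)
  moreover have "real (Suc m) / real m - 1 = 1 / real m"
    using m0 by (simp add: field_simps)
  ultimately show "ln (real (Suc m)) - ln (real m) \<le> 1 / real m" by linarith
qed

lemma tele_inv:
  assumes "n \<ge> (1::nat)"
  shows "(\<Sum>m=1..<n. (1 / real m - 1 / real (Suc m))) \<le> 1"
proof -
  have "(\<Sum>m=1..<n. (1 / real m - 1 / real (Suc m))) = (\<Sum>m=1..<n. ((\<lambda>i. - 1 / real i) (Suc m) - (\<lambda>i. - 1 / real i) m))"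
    by (intro sum.cong) auto
  also have "\<dots> = - 1 / real n + 1" using sum_Suc_diff'[OF assms, of "\<lambda>i. - 1 / real i"] by simp
  also have "\<dots> \<le> 1" by simp
  finally show ?thesis .
qed

lemma S1_bound:
  fixes n j :: nat
  assumes n: "n \<ge> 1"
  shows "\<bar>(\<Sum>m=1..<n. ln (real m) ^ j / real m) - ln (real n) ^ Suc j / real (Suc j)\<bar>
          \<le> 2 * ln (real n) ^ j"
proof -
  define u where "u = (\<lambda>m::nat. ln (real m))"
  define L where "L = ln (real n)"
  define F where "F = (\<lambda>m. u m ^ Suc j / real (Suc j))"
  define f where "f = (\<lambda>m. u m ^ j / real m)"
  define S where "S = (\<Sum>m=1..<n. f m)"
  define g where "g = (\<lambda>m::nat. 1 / real m - 1 / real (Suc m))"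
  have L0: "0 \<le> L" using n by (simp add: L_def)
  have u0: "m \<ge> 1 \<Longrightarrow> 0 \<le> u m" for m by (simp add: u_def)
  have uL: "1 \<le> m \<Longrightarrow> m \<le> n \<Longrightarrow> u m \<le> L" for m by (simp add: u_def L_def)
  have tele: "(\<Sum>m=1..<n. F (Suc m) - F m) = F n" 
    using sum_Suc_diff'[OF n, of F] by (simp add: F_def u_def)
  have lo: "f m - L ^ j * g m \<le> F (Suc m) - F m"
    if m: "m \<in> {1..<n}" for m
  proof -
    have m1: "m \<ge> 1" "Suc m \<le> n" using m by auto
    have ub: "u m \<le> u (Suc m)" using m1 by (simp add: u_def)
    have pd: "real (Suc j) * u m ^ j * (u (Suc m) - u m) \<le> u (Suc m) ^ Suc j - u m ^ Suc j"
      using pow_diff_bounds[OF u0[OF m1(1)] ub] by blast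
    have d: "1 / real (Suc m) \<le> u (Suc m) - u m" using ln_step_bounds(1)[OF m1(1)] by (simp add: u_def)
    have "u m ^ j / real (Suc m) \<le> u m ^ j * (u (Suc m) - u m)"
      using mult_left_mono[OF d, of "u m ^ j"] u0[OF m1(1)] by (simp add: divide_simps)
    also have "\<dots> = (real (Suc j) * u m ^ j * (u (Suc m) - u m)) / real (Suc j)"
      by simp
    also have "\<dots> \<le> (u (Suc m) ^ Suc j - u m ^ Suc j) / real (Suc j)"
      using pd by (intro divide_right_mono) auto
    also have "\<dots> = F (Suc m) - F m" by (simp add: F_def diff_divide_distrib)
    finally have A: "u m ^ j / real (Suc m) \<le> F (Suc m) - F m" .
    have "u m ^ j \<le> L ^ j" using u0[OF m1(1)] uL[of m] m1 by (intro power_mono) auto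
    then have B: "u m ^ j * g m \<le> L ^ j * g m"
      using m1 by (intro mult_right_mono) (auto simp: field_simps g_def)
    have "f m - u m ^ j * g m = u m ^ j / real (Suc m)"
      by (simp add: f_def g_def right_diff_distrib)
    then show ?thesis using A B by linarith
  qed
  have hi: "F (Suc m) - F m \<le> f (Suc m) + L ^ j * g m"
    if m: "m \<in> {1..<n}" for m
  proof -
    have m1: "m \<ge> 1" "Suc m \<le> n" using m by auto
    have ub: "u m \<le> u (Suc m)" using m1 by (simp add: u_def)
    have pd: "u (Suc m) ^ Suc j - u m ^ Suc j \<le> real (Suc j) * u (Suc m) ^ j * (u (Suc m) - u m)"
      using pow_diff_bounds[OF u0[OF m1(1)] ub] by blast
    have d: "u (Suc m) - u m \<le> 1 / real m" using ln_step_bounds(2)[OF m1(1)] by (simp add: u_def)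
    have "F (Suc m) - F m = (u (Suc m) ^ Suc j - u m ^ Suc j) / real (Suc j)"
      by (simp add: F_def diff_divide_distrib)
    also have "\<dots> \<le> (real (Suc j) * u (Suc m) ^ j * (u (Suc m) - u m)) / real (Suc j)"
      using pd by (intro divide_right_mono) auto
    also have "\<dots> = u (Suc m) ^ j * (u (Suc m) - u m)" by simp
    also have "\<dots> \<le> u (Suc m) ^ j * (1 / real m)"
      using mult_left_mono[OF d, of "u (Suc m) ^ j"] u0[of "Suc m"] by simp
    finally have A: "F (Suc m) - F m \<le> u (Suc m) ^ j * (1 / real m)" .
    have "u (Suc m) ^ j \<le> L ^ j" using u0[of "Suc m"] uL[of "Suc m"] m1 by (intro power_mono) auto
    then have B: "u (Suc m) ^ j * g m \<le> L ^ j * g m"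
      using m1 by (intro mult_right_mono) (auto simp: field_simps g_def)
    have "u (Suc m) ^ j * (1 / real m) = f (Suc m) + u (Suc m) ^ j * g m"
      by (simp add: f_def g_def right_diff_distrib)
    then show ?thesis using A B by linarith
  qed
  have T: "(\<Sum>m=1..<n. g m) \<le> 1" unfolding g_def by (rule tele_inv[OF n])
  have T0: "0 \<le> (\<Sum>m=1..<n. g m)"
    by (intro sum_nonneg) (auto simp: field_simps g_def)
  have "S - L ^ j * (\<Sum>m=1..<n. g m) \<le> F n"
  proof -
    have "(\<Sum>m=1..<n. f m - L ^ j * g m) \<le> (\<Sum>m=1..<n. F (Suc m) - F m)"
      by (rule sum_mono) (rule lo)
    then show ?thesis unfolding tele S_def by (simp add: sum_subtractf sum_distrib_left)
  qed
  then have low: "S - L ^ j \<le> F n" using T L0 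
    by (smt (verit, ccfv_SIG) mult_left_le zero_le_power)
  have fs: "(\<Sum>m=1..<n. f (Suc m)) = S + f n - f 1"
    using sum_Suc_diff'[OF n, of f] unfolding S_def by (simp add: sum_subtractf)
  have f1: "0 \<le> f 1" by (simp add: f_def u_def)
  have fn: "f n \<le> L ^ j" 
  proof -
    have "f n = L ^ j / real n" by (simp add: f_def u_def L_def)
    also have "\<dots> \<le> L ^ j / 1" using n L0 by (intro divide_left_mono) auto
    finally show ?thesis by simp
  qed
  have "F n \<le> (\<Sum>m=1..<n. f (Suc m)) + L ^ j * (\<Sum>m=1..<n. g m)"
  proof -
    have "(\<Sum>m=1..<n. F (Suc m) - F m) \<le> (\<Sum>m=1..<n. f (Suc m) + L ^ j * g m)"
      by (rule sum_mono) (rule hi)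
    then show ?thesis unfolding tele by (simp add: sum.distrib sum_distrib_left)
  qed
  then have high: "F n \<le> S + 2 * L ^ j" using T L0 fs f1 fn
    by (smt (verit, ccfv_SIG) mult_left_le zero_le_power)
  have "F n = L ^ Suc j / real (Suc j)" by (simp add: F_def u_def L_def)
  then show ?thesis using low high L0 unfolding S_def f_def u_def L_def
    by (smt (verit) zero_le_power)
qed


lemma S2_bound:
  fixes n j :: nat
  assumes n: "n \<ge> 2"
  shows "\<bar>(\<Sum>m=1..<n. ln (real m) ^ j / (real n - real m)) - ln (real n) ^ Suc j\<bar>
          \<le> 5 * real (Suc j) * ln (real n) ^ j"
proof -
  define u where "u = (\<lambda>m::nat. ln (real m))"
  define L where "L = ln (real n)"
  define H1 where "H1 = (\<Sum>m=1..<n. 1 / real m)"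
  define H' where "H' = (\<Sum>m=1..<n. 1 / (real n - real m))"
  define c where "c = (if j = 0 then 0 else real j * L ^ (j - 1))"
  have n1: "n \<ge> 1" using n by simp
  have Lhalf: "L \<ge> 1/2"
  proof -
    have "ln (2::real) \<le> L" unfolding L_def using n by simp
    then show ?thesis using ln2_ge_two_thirds by linarith
  qed
  have L0: "0 \<le> L" using Lhalf by simp
  have u0: "m \<ge> 1 \<Longrightarrow> 0 \<le> u m" for m by (simp add: u_def)
  have uL: "1 \<le> m \<Longrightarrow> m \<le> n \<Longrightarrow> u m \<le> L" for m by (simp add: u_def L_def)
  have H1b: "\<bar>H1 - L\<bar> \<le> 2"
    using S1_bound[OF n1, of 0] by (simp add: H1_def L_def)
  have HH: "H' = H1"
  proof -
    have "H' = (\<Sum>m\<in>{1..<n}. (\<lambda>i. 1 / (real n - real i)) (n + 1 - Suc m))"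
      unfolding H'_def by (rule sum.atLeastLessThan_rev)
    also have "\<dots> = H1" unfolding H1_def
      by (intro sum.cong) (auto simp: of_nat_diff)
    finally show ?thesis .
  qed
  have c0: "0 \<le> c" using L0 by (simp add: c_def)
  have cb: "c * (L + 2) \<le> 5 * real j * L ^ j"
  proof (cases j)
    case 0 then show ?thesis by (simp add: c_def)
  next
    case (Suc i)
    have "c * (L + 2) = real j * (L ^ i * (L + 2))" by (simp add: c_def Suc)
    also have "\<dots> \<le> real j * (L ^ i * (5 * L))"
      using Lhalf L0 by (intro mult_left_mono) auto
    also have "\<dots> = 5 * real j * L ^ j" by (simp add: Suc)
    finally show ?thesis .
  qed
  have tm: "0 \<le> (L ^ j - u m ^ j) / (real n - real m) \<and>
              (L ^ j - u m ^ j) / (real n - real m) \<le> c / real m" if m: "m \<in> {1..<n}" for m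
  proof -
    have m1: "1 \<le> m" "m < n" using m by auto
    have nm: "real n - real m > 0" using m1 by simp
    have ul: "u m \<le> L" using uL m1 by simp
    have pos: "0 \<le> L ^ j - u m ^ j" using power_mono[OF ul u0[OF m1(1)]] by simp
    have lnb: "L - u m \<le> (real n - real m) / real m"
    proof -
      have "L - u m = ln (real n / real m)" using m1 by (simp add: L_def u_def ln_div)
      also have "\<dots> \<le> real n / real m - 1" using m1 by (intro ln_le_minus_one) simp
      also have "\<dots> = (real n - real m) / real m" using m1 by (simp add: field_simps)
      finally show ?thesis .
    qed
    have up: "L ^ j - u m ^ j \<le> c * ((real n - real m) / real m)"
    proof (cases j)
      case 0 then show ?thesis by (simp add: c_def)
    next
      case (Suc i)
      have "L ^ j - u m ^ j \<le> real j * L ^ i * (L - u m)"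
        using pow_diff_bounds[OF u0[OF m1(1)] ul, of i] Suc by simp
      also have "\<dots> \<le> real j * L ^ i * ((real n - real m) / real m)"
        using lnb L0 by (intro mult_left_mono) auto
      finally show ?thesis by (simp add: c_def Suc)
    qed
    show ?thesis
    proof
      show "0 \<le> (L ^ j - u m ^ j) / (real n - real m)" using pos nm by simp
      have "(L ^ j - u m ^ j) / (real n - real m) \<le> c * ((real n - real m) / real m) / (real n - real m)"
        using up nm by (intro divide_right_mono) auto
      also have "\<dots> = c / real m" using nm by simp
      finally show "(L ^ j - u m ^ j) / (real n - real m) \<le> c / real m" .
    qed
  qed
  define S2 where "S2 = (\<Sum>m=1..<n. u m ^ j / (real n - real m))"
  have eqd: "L ^ j * H' - S2 = (\<Sum>m=1..<n. (L ^ j - u m ^ j) / (real n - real m))"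
    unfolding H'_def S2_def sum_distrib_left sum_subtractf[symmetric]
    by (intro sum.cong) (auto simp: diff_divide_distrib)
  have d0: "0 \<le> L ^ j * H' - S2" unfolding eqd using tm by (intro sum_nonneg) blast
  have d1: "L ^ j * H' - S2 \<le> c * H1"
  proof -
    have "L ^ j * H' - S2 \<le> (\<Sum>m=1..<n. c / real m)" unfolding eqd using tm by (intro sum_mono) blast
    also have "\<dots> = c * H1" by (simp add: H1_def sum_distrib_left)
    finally show ?thesis .
  qed
  have "c * H1 \<le> c * (L + 2)" using H1b c0 by (intro mult_left_mono) auto
  then have d2: "L ^ j * H' - S2 \<le> 5 * real j * L ^ j" using d1 cb by linarith
  have d3: "\<bar>L ^ j * H' - L ^ Suc j\<bar> \<le> 2 * L ^ j"
  proof -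
    have "L ^ j * H' - L ^ Suc j = L ^ j * (H1 - L)" by (simp add: HH algebra_simps)
    then have "\<bar>L ^ j * H' - L ^ Suc j\<bar> = L ^ j * \<bar>H1 - L\<bar>"
      using L0 by (simp add: abs_mult)
    also have "\<dots> \<le> L ^ j * 2" using H1b L0 by (intro mult_left_mono) auto
    finally show ?thesis by simp
  qed
  have "\<bar>S2 - L ^ Suc j\<bar> \<le> 5 * real j * L ^ j + 2 * L ^ j" using d0 d2 d3 by linarith
  also have "\<dots> \<le> 5 * real (Suc j) * L ^ j" using L0 by (simp add: algebra_simps)
  finally show ?thesis unfolding S2_def u_def L_def .
qed

lemma diag_bound:
  fixes n j :: nat
  assumes n: "n \<ge> 2"
  shows "\<bar>(\<Sum>m=1..<n. ln (real m) ^ j / (real m * (real n - real m)))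
            - (1 / real (Suc j) + 1) * ln (real n) ^ Suc j / real n\<bar>
          \<le> 7 * real (j + 2) * ln (real n) ^ j / real n"
proof -
  define L where "L = ln (real n)"
  define S1 where "S1 = (\<Sum>m=1..<n. ln (real m) ^ j / real m)"
  define S2 where "S2 = (\<Sum>m=1..<n. ln (real m) ^ j / (real n - real m))"
  have n0: "real n > 0" using n by simp
  have b1: "\<bar>S1 - L ^ Suc j / real (Suc j)\<bar> \<le> 2 * L ^ j"
    using S1_bound[of n j] n by (simp add: S1_def L_def)
  have b2: "\<bar>S2 - L ^ Suc j\<bar> \<le> 5 * real (Suc j) * L ^ j"
    using S2_bound[OF n, of j] by (simp add: S2_def L_def)
  have L0: "0 \<le> L" using n by (simp add: L_def)
  have eq: "(\<Sum>m=1..<n. ln (real m) ^ j / (real m * (real n - real m))) = (S1 + S2) / real n"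
  proof -
    have "(\<Sum>m=1..<n. ln (real m) ^ j / (real m * (real n - real m)))
          = (\<Sum>m=1..<n. (ln (real m) ^ j / real m + ln (real m) ^ j / (real n - real m)) / real n)"
    proof (intro sum.cong refl)
      fix m assume "m \<in> {1..<n}"
      then have "real m > 0" "real n - real m > 0" by auto
      then show "ln (real m) ^ j / (real m * (real n - real m)) =
          (ln (real m) ^ j / real m + ln (real m) ^ j / (real n - real m)) / real n"
        by (simp add: field_simps)
    qed
    also have "\<dots> = (S1 + S2) / real n"
      by (simp add: S1_def S2_def sum_divide_distrib[symmetric] sum.distrib)
    finally show ?thesis .
  qed
  have "(S1 + S2) / real n - (1 / real (Suc j) + 1) * L ^ Suc j / real n
        = ((S1 - L ^ Suc j / real (Suc j)) + (S2 - L ^ Suc j)) / real n"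
  proof -
    have e1: "(1 / real (Suc j) + 1) * L ^ Suc j / real n = (L ^ Suc j / real (Suc j)) / real n + L ^ Suc j / real n"
      by (simp add: distrib_right add_divide_distrib)
    show ?thesis unfolding e1 by (simp add: diff_divide_distrib add_divide_distrib)
  qed
  then have "\<bar>(S1 + S2) / real n - (1 / real (Suc j) + 1) * L ^ Suc j / real n\<bar>
        = \<bar>(S1 - L ^ Suc j / real (Suc j)) + (S2 - L ^ Suc j)\<bar> / real n"
    using n0 by (simp add: abs_divide)
  also have "\<dots> \<le> (2 * L ^ j + 5 * real (Suc j) * L ^ j) / real n"
    using b1 b2 n0 by (intro divide_right_mono) auto
  also have "\<dots> \<le> 7 * real (j + 2) * L ^ j / real n"
    using n0 L0 by (intro divide_right_mono) (auto simp: algebra_simps)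
  finally show ?thesis unfolding eq L_def .
qed


lemma abel_gen:
  fixes z :: "nat \<Rightarrow> complex" and b :: "nat \<Rightarrow> real"
  assumes P: "\<And>x y. a \<le> x \<Longrightarrow> x \<le> y \<Longrightarrow> y \<le> c \<Longrightarrow> cmod (\<Sum>i=x..y. z i) \<le> B"
  shows "a + N \<le> c \<Longrightarrow> cmod ((\<Sum>i=a..a+N. z i * of_real (b i)) - of_real (b (a+N)) * (\<Sum>i=a..a+N. z i))
          \<le> B * (\<Sum>i=a..<a+N. \<bar>b (Suc i) - b i\<bar>)"
proof (induction N)
  case 0 then show ?case by simp
next
  case (Suc N)
  define E where "E = (\<Sum>i=a..a+N. z i * of_real (b i))"
  define Q where "Q = (\<Sum>i=a..a+N. z i)"
  have IH: "cmod (E - of_real (b (a+N)) * Q) \<le> B * (\<Sum>i=a..<a+N. \<bar>b (Suc i) - b i\<bar>)"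
    using Suc by (simp add: E_def Q_def)
  have BQ: "cmod Q \<le> B" unfolding Q_def using Suc.prems by (intro P) auto
  have e1: "(\<Sum>i=a..a+Suc N. z i * of_real (b i)) = E + z (Suc (a+N)) * of_real (b (Suc (a+N)))"
    by (simp add: E_def)
  have e2: "(\<Sum>i=a..a+Suc N. z i) = Q + z (Suc (a+N))" by (simp add: Q_def)
  have e3: "(\<Sum>i=a..<a+Suc N. \<bar>b (Suc i) - b i\<bar>) = (\<Sum>i=a..<a+N. \<bar>b (Suc i) - b i\<bar>) + \<bar>b (Suc (a+N)) - b (a+N)\<bar>"
    by simp
  have "(\<Sum>i=a..a+Suc N. z i * of_real (b i)) - of_real (b (a+Suc N)) * (\<Sum>i=a..a+Suc N. z i)
        = (E - of_real (b (a+N)) * Q) + of_real (b (a+N) - b (Suc (a+N))) * Q"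
    unfolding e1 e2 by (simp add: algebra_simps)
  also have "cmod \<dots> \<le> cmod (E - of_real (b (a+N)) * Q) + cmod (of_real (b (a+N) - b (Suc (a+N))) * Q)"
    by (rule norm_triangle_ineq)
  also have "cmod (of_real (b (a+N) - b (Suc (a+N))) * Q) = \<bar>b (Suc (a+N)) - b (a+N)\<bar> * cmod Q"
    by (simp only: norm_mult norm_of_real) (simp add: abs_minus_commute)
  also have "\<dots> \<le> \<bar>b (Suc (a+N)) - b (a+N)\<bar> * B" using BQ by (intro mult_left_mono) auto
  finally show ?case using IH unfolding e3 by (simp add: algebra_simps)
qed

lemma abel_incr:
  fixes z :: "nat \<Rightarrow> complex" and b :: "nat \<Rightarrow> real"
  assumes P: "\<And>x y. a \<le> x \<Longrightarrow> x \<le> y \<Longrightarrow> y \<le> c \<Longrightarrow> cmod (\<Sum>i=x..y. z i) \<le> B"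
    and ac: "a \<le> c" and mono: "\<And>i. a \<le> i \<Longrightarrow> i < c \<Longrightarrow> b i \<le> b (Suc i)" and b0: "0 \<le> b a"
  shows "cmod (\<Sum>i=a..c. z i * of_real (b i)) \<le> 2 * B * b c"
proof -
  have B0: "0 \<le> B" using P[of a a] ac by (meson norm_ge_zero order_trans order_refl)
  have c: "c = a + (c - a)" using ac by simp
  have V: "(\<Sum>i=a..<c. \<bar>b (Suc i) - b i\<bar>) = b c - b a"
  proof -
    have "(\<Sum>i=a..<c. \<bar>b (Suc i) - b i\<bar>) = (\<Sum>i=a..<c. b (Suc i) - b i)"
      using mono by (intro sum.cong) auto
    also have "\<dots> = b c - b a" by (rule sum_Suc_diff'[OF ac])
    finally show ?thesis .
  qed
  have V0: "0 \<le> b c - b a" unfolding V[symmetric] by (intro sum_nonneg) auto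
  have G: "cmod ((\<Sum>i=a..c. z i * of_real (b i)) - of_real (b c) * (\<Sum>i=a..c. z i)) \<le> B * (b c - b a)"
    using abel_gen[where a=a and c=c and z=z and B=B and N="c - a" and b=b, OF P] ac V by simp
  have Q: "cmod (\<Sum>i=a..c. z i) \<le> B" using P[of a c] ac by simp
  have "cmod (\<Sum>i=a..c. z i * of_real (b i)) \<le> cmod ((\<Sum>i=a..c. z i * of_real (b i)) - of_real (b c) * (\<Sum>i=a..c. z i)) + cmod (of_real (b c) * (\<Sum>i=a..c. z i))"
    using norm_triangle_ineq[of "(\<Sum>i=a..c. z i * of_real (b i)) - of_real (b c) * (\<Sum>i=a..c. z i)" "of_real (b c) * (\<Sum>i=a..c. z i)"]
    by simp
  also have "cmod (of_real (b c) * (\<Sum>i=a..c. z i)) \<le> b c * B"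
    using Q V0 b0 by (simp add: norm_mult mult_left_mono)
  finally have "cmod (\<Sum>i=a..c. z i * of_real (b i)) \<le> B * (b c - b a) + b c * B" using G by linarith
  also have "\<dots> \<le> 2 * B * b c" using B0 b0 by (simp add: algebra_simps mult_left_mono)
  finally show ?thesis .
qed

lemma abel_decr:
  fixes z :: "nat \<Rightarrow> complex" and b :: "nat \<Rightarrow> real"
  assumes P: "\<And>x y. a \<le> x \<Longrightarrow> x \<le> y \<Longrightarrow> y \<le> c \<Longrightarrow> cmod (\<Sum>i=x..y. z i) \<le> B"
    and ac: "a \<le> c" and mono: "\<And>i. a \<le> i \<Longrightarrow> i < c \<Longrightarrow> b (Suc i) \<le> b i" and b0: "0 \<le> b c"
  shows "cmod (\<Sum>i=a..c. z i * of_real (b i)) \<le> B * b a"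
proof -
  have B0: "0 \<le> B" using P[of a a] ac by (meson norm_ge_zero order_trans order_refl)
  have c: "c = a + (c - a)" using ac by simp
  have V: "(\<Sum>i=a..<c. \<bar>b (Suc i) - b i\<bar>) = b a - b c"
  proof -
    have "(\<Sum>i=a..<c. \<bar>b (Suc i) - b i\<bar>) = - (\<Sum>i=a..<c. b (Suc i) - b i)"
      using mono by (simp add: sum_negf[symmetric])
    also have "\<dots> = b a - b c" using sum_Suc_diff'[OF ac, of b] by simp
    finally show ?thesis .
  qed
  have V0: "0 \<le> b a - b c" unfolding V[symmetric] by (intro sum_nonneg) auto
  have G: "cmod ((\<Sum>i=a..c. z i * of_real (b i)) - of_real (b c) * (\<Sum>i=a..c. z i)) \<le> B * (b a - b c)"
    using abel_gen[where a=a and c=c and z=z and B=B and N="c - a" and b=b, OF P] ac V by simp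
  have Q: "cmod (\<Sum>i=a..c. z i) \<le> B" using P[of a c] ac by simp
  have "cmod (\<Sum>i=a..c. z i * of_real (b i)) \<le> cmod ((\<Sum>i=a..c. z i * of_real (b i)) - of_real (b c) * (\<Sum>i=a..c. z i)) + cmod (of_real (b c) * (\<Sum>i=a..c. z i))"
    using norm_triangle_ineq[of "(\<Sum>i=a..c. z i * of_real (b i)) - of_real (b c) * (\<Sum>i=a..c. z i)" "of_real (b c) * (\<Sum>i=a..c. z i)"]
    by simp
  also have "cmod (of_real (b c) * (\<Sum>i=a..c. z i)) \<le> b c * B"
    using Q b0 by (simp add: norm_mult mult_left_mono)
  finally have "cmod (\<Sum>i=a..c. z i * of_real (b i)) \<le> B * (b a - b c) + b c * B" using G by linarith
  also have "\<dots> = B * b a" by (simp add: algebra_simps)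
  finally show ?thesis .
qed

lemma geom_bound:
  fixes w :: complex
  assumes w1: "cmod w = 1" and wne: "w \<noteq> 1"
  shows "cmod (\<Sum>i=x..y. w ^ i) \<le> 2 / cmod (1 - w)"
proof (cases "x \<le> y")
  case False then show ?thesis by simp
next
  case True
  have nz: "cmod (1 - w) > 0" using wne by simp
  have "(1 - w) * (\<Sum>i=x..y. w ^ i) = w ^ x - w ^ Suc y" by (rule sum_gp_multiplied[OF True])
  then have "cmod (1 - w) * cmod (\<Sum>i=x..y. w ^ i) = cmod (w ^ x - w ^ Suc y)" by (metis norm_mult)
  also have "\<dots> \<le> cmod (w ^ x) + cmod (w ^ Suc y)" by (rule norm_triangle_ineq4)
  also have "\<dots> = 2" using w1 by (simp add: norm_power norm_mult)
  finally show ?thesis using nz by (simp add: field_simps mult.commute)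
qed

lemma offdiag_bound:
  fixes w :: complex and n j :: nat
  assumes w1: "cmod w = 1" and wne: "w \<noteq> 1" and n: "n \<ge> 2"
  shows "cmod (\<Sum>m=1..<n. w ^ m * of_real (ln (real m) ^ j / (real m * (real n - real m))))
           \<le> 8 / cmod (1 - w) * ln (real n) ^ j / real n"
proof -
  define B where "B = 2 / cmod (1 - w)"
  define L where "L = ln (real n)"
  define u where "u = (\<lambda>m::nat. ln (real m))"
  have L0: "0 \<le> L" using n by (simp add: L_def)
  have u0: "m \<ge> 1 \<Longrightarrow> 0 \<le> u m" for m by (simp add: u_def)
  have B0: "0 \<le> B" by (simp add: B_def)
  have G: "\<And>x y. cmod (\<Sum>i=x..y. w ^ i) \<le> B" unfolding B_def by (rule geom_bound[OF w1 wne])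
  have ivl: "{1..<n} = {1..n-1}" using n by auto
  have un: "u (n - 1) ^ j \<le> L ^ j" using n u0[of "n-1"] by (intro power_mono) (auto simp: u_def L_def)
  have P1int: "cmod (\<Sum>i=x..y. w ^ i * of_real (1 / real i)) \<le> B" if "1 \<le> x" "x \<le> y" for x y
  proof -
    have "cmod (\<Sum>i=x..y. w ^ i * of_real (1 / real i)) \<le> B * (1 / real x)"
      using that by (intro abel_decr[where B=B]) (auto intro: G simp: field_simps)
    also have "\<dots> \<le> B * 1" using that B0 by (intro mult_left_mono) auto
    finally show ?thesis by simp
  qed
  have P1: "cmod (\<Sum>i=1..n-1. (w ^ i * of_real (1 / real i)) * of_real (u i ^ j)) \<le> 2 * B * L ^ j"
  proof -
    have "cmod (\<Sum>i=1..n-1. (w ^ i * of_real (1 / real i)) * of_real (u i ^ j)) \<le> 2 * B * u (n-1) ^ j"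
    proof (rule abel_incr[where B=B])
      show "\<And>x y. 1 \<le> x \<Longrightarrow> x \<le> y \<Longrightarrow> y \<le> n - 1 \<Longrightarrow> cmod (\<Sum>i=x..y. w ^ i * of_real (1 / real i)) \<le> B"
        by (rule P1int)
      show "1 \<le> n - 1" using n by simp
      show "u i ^ j \<le> u (Suc i) ^ j" if "1 \<le> i" for i
        using that u0[of i] by (intro power_mono) (auto simp: u_def)
      show "0 \<le> u 1 ^ j" by (simp add: u_def)
    qed
    also have "\<dots> \<le> 2 * B * L ^ j" using un B0 by (intro mult_left_mono) auto
    finally show ?thesis .
  qed
  have P2: "cmod (\<Sum>i=1..n-1. w ^ i * of_real (u i ^ j / (real n - real i))) \<le> 2 * B * L ^ j"
  proof -
    have "cmod (\<Sum>i=1..n-1. w ^ i * of_real (u i ^ j / (real n - real i))) \<le> 2 * B * (u (n-1) ^ j / (real n - real (n-1)))"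
    proof (rule abel_incr[where B=B])
      show "\<And>x y. 1 \<le> x \<Longrightarrow> x \<le> y \<Longrightarrow> y \<le> n - 1 \<Longrightarrow> cmod (\<Sum>i=x..y. w ^ i) \<le> B"
        by (rule G)
      show "1 \<le> n - 1" using n by simp
      show "u i ^ j / (real n - real i) \<le> u (Suc i) ^ j / (real n - real (Suc i))"
        if "1 \<le> i" "i < n - 1" for i
      proof -
        have a: "u i ^ j \<le> u (Suc i) ^ j" using that u0[of i] by (intro power_mono) (auto simp: u_def)
        have p: "0 < real n - real (Suc i)" using that by simp
        have "u i ^ j / (real n - real i) \<le> u (Suc i) ^ j / (real n - real i)"
          using a that by (intro divide_right_mono) auto
        also have "\<dots> \<le> u (Suc i) ^ j / (real n - real (Suc i))"
          using p u0[of "Suc i"] by (intro divide_left_mono) auto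
        finally show ?thesis .
      qed
      show "0 \<le> u 1 ^ j / (real n - real 1)" using n by (simp add: u_def)
    qed
    also have "u (n-1) ^ j / (real n - real (n-1)) = u (n-1) ^ j" using n by (simp add: of_nat_diff)
    also have "2 * B * u (n-1) ^ j \<le> 2 * B * L ^ j" using un B0 by (intro mult_left_mono) auto
    finally show ?thesis .
  qed
  have eq: "(\<Sum>m=1..<n. w ^ m * of_real (ln (real m) ^ j / (real m * (real n - real m))))
        = ((\<Sum>i=1..n-1. (w ^ i * of_real (1 / real i)) * of_real (u i ^ j))
          + (\<Sum>i=1..n-1. w ^ i * of_real (u i ^ j / (real n - real i)))) / of_real (real n)"
  proof -
    have "(\<Sum>m=1..<n. w ^ m * of_real (ln (real m) ^ j / (real m * (real n - real m))))
        = (\<Sum>i=1..n-1. ((w ^ i * of_real (1 / real i)) * of_real (u i ^ j)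
          + w ^ i * of_real (u i ^ j / (real n - real i))) / of_real (real n))"
      unfolding ivl
    proof (intro sum.cong refl)
      fix i assume i: "i \<in> {1..n-1}"
      then have ip: "real i > 0" "real n - real i > 0" using n by auto
      have "ln (real i) ^ j / (real i * (real n - real i)) = ((1 / real i) * u i ^ j + u i ^ j / (real n - real i)) / real n"
        using ip by (simp add: u_def field_simps)
      then show "w ^ i * of_real (ln (real i) ^ j / (real i * (real n - real i))) =
         ((w ^ i * of_real (1 / real i)) * of_real (u i ^ j) + w ^ i * of_real (u i ^ j / (real n - real i))) / of_real (real n)"
        by (simp add: algebra_simps add_divide_distrib)
    qed
    also have "\<dots> = ((\<Sum>i=1..n-1. (w ^ i * of_real (1 / real i)) * of_real (u i ^ j))
          + (\<Sum>i=1..n-1. w ^ i * of_real (u i ^ j / (real n - real i)))) / of_real (real n)"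
      by (simp add: sum_divide_distrib[symmetric] sum.distrib)
    finally show ?thesis .
  qed
  have num: "cmod ((\<Sum>i=1..n-1. (w ^ i * of_real (1 / real i)) * of_real (u i ^ j))
          + (\<Sum>i=1..n-1. w ^ i * of_real (u i ^ j / (real n - real i)))) \<le> 2 * B * L ^ j + 2 * B * L ^ j"
    using P1 P2 by (meson add_mono norm_triangle_ineq order_trans)
  have "cmod (\<Sum>m=1..<n. w ^ m * of_real (ln (real m) ^ j / (real m * (real n - real m))))
        \<le> (2 * B * L ^ j + 2 * B * L ^ j) / real n"
    unfolding eq norm_divide norm_of_real using num n by (simp add: divide_right_mono)
  also have "\<dots> = 8 / cmod (1 - w) * L ^ j / real n" by (simp add: B_def)
  finally show ?thesis by (simp add: L_def)
qed




lemma sin_ge_quarter: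
  fixes x :: real
  assumes "0 \<le> x" "x \<le> 2"
  shows "x / 4 \<le> sin x"
proof -
  have "\<bar>sin x - (\<Sum>m<3. sin_coeff m * x ^ m)\<bar> \<le> inverse (fact 3) * \<bar>x\<bar> ^ 3"
    by (rule Maclaurin_sin_bound)
  moreover have "(\<Sum>m<3. sin_coeff m * x ^ m) = x"
    by (simp add: numeral_3_eq_3 sin_coeff_def)
  ultimately have "\<bar>sin x - x\<bar> \<le> x ^ 3 / 6" using assms by (simp add: fact_numeral)
  then have "x - x ^ 3 / 6 \<le> sin x" by linarith
  moreover have "x ^ 3 / 6 \<le> 3 * x / 4"
  proof -
    have "x ^ 3 = x * x\<^sup>2" by (simp add: power3_eq_cube power2_eq_square)
    also have "\<dots> \<le> x * 4" using assms by (intro mult_left_mono) (auto simp: power2_eq_square intro: mult_mono[of x 2 x 2, simplified])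
    finally show ?thesis using assms by linarith
  qed
  ultimately show ?thesis by linarith
qed

lemma norm_one_minus_cis:
  fixes \<theta> \<gamma> :: real
  assumes g: "0 < \<gamma>" and lo: "\<gamma> \<le> \<bar>\<theta>\<bar>" and hi: "\<bar>\<theta>\<bar> \<le> 2 * pi - \<gamma>"
  shows "\<gamma> / 4 \<le> cmod (1 - cis \<theta>)"
proof -
  define t where "t = \<bar>\<theta>\<bar> / 2"
  have sq: "(cmod (1 - cis \<theta>))\<^sup>2 = 4 * (sin t)\<^sup>2"
  proof -
    have "(cmod (1 - cis \<theta>))\<^sup>2 = (1 - cos \<theta>)\<^sup>2 + (sin \<theta>)\<^sup>2"
      by (simp add: cmod_power2)
    also have "\<dots> = 2 - 2 * cos \<theta>"
      using sin_cos_squared_add[of \<theta>] by (simp add: power2_eq_square algebra_simps)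
    also have "cos \<theta> = 1 - 2 * (sin (\<theta>/2))\<^sup>2" using cos_double_sin[of "\<theta>/2"] by simp
    also have "(sin (\<theta>/2))\<^sup>2 = (sin t)\<^sup>2"
    proof (cases "\<theta> \<ge> 0")
      case True then show ?thesis unfolding t_def by simp
    next
      case False then have "t = - (\<theta>/2)" by (simp add: t_def)
      then have "sin t = - sin (\<theta>/2)" by simp
      then show ?thesis by (simp add: power2_eq_square)
    qed
    finally show ?thesis by simp
  qed
  have t1: "\<gamma>/2 \<le> t" "t \<le> pi - \<gamma>/2" using lo hi by (auto simp: t_def)
  have st: "\<gamma> / 8 \<le> sin t"
  proof (cases "t \<le> pi/2")
    case True
    have "t \<le> 2" using True pi_less_4 by linarith
    then have "t / 4 \<le> sin t" using t1 g by (intro sin_ge_quarter) auto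
    then show ?thesis using t1 by linarith
  next
    case False
    have "pi - t \<le> 2" using False pi_less_4 by linarith
    then have "(pi - t) / 4 \<le> sin (pi - t)" using t1 False g by (intro sin_ge_quarter) auto
    then show ?thesis using t1 by simp
  qed
  have "(\<gamma> / 4)\<^sup>2 \<le> (cmod (1 - cis \<theta>))\<^sup>2"
  proof -
    have "(\<gamma> / 4)\<^sup>2 = 4 * (\<gamma> / 8)\<^sup>2" by (simp add: power2_eq_square)
    also have "\<dots> \<le> 4 * (sin t)\<^sup>2" using st g by (intro mult_left_mono power_mono) auto
    also have "\<dots> = (cmod (1 - cis \<theta>))\<^sup>2" by (rule sq[symmetric])
    finally show ?thesis .
  qed
  then show ?thesis by (rule power2_le_imp_le) simp
qed

lemma sep_bound:
  fixes \<alpha> \<beta> :: complex and \<gamma> :: real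
  assumes eqn: "cmod \<alpha> = cmod \<beta>" and b0: "\<beta> \<noteq> 0" and g: "0 < \<gamma>"
    and d: "\<gamma> \<le> \<bar>Arg \<alpha> - Arg \<beta>\<bar>" and pa: "\<gamma> \<le> \<bar>pi - Arg \<alpha>\<bar>" and pb: "\<gamma> \<le> \<bar>pi - Arg \<beta>\<bar>"
  shows "\<gamma> / 4 \<le> cmod (1 - \<alpha> / \<beta>)"
proof -
  have "\<alpha> / \<beta> = cis (Arg \<alpha> - Arg \<beta>)"
  proof -
    have "\<alpha> / \<beta> = rcis (cmod \<alpha>) (Arg \<alpha>) / rcis (cmod \<beta>) (Arg \<beta>)" by (simp add: rcis_cmod_Arg)
    also have "\<dots> = cis (Arg \<alpha> - Arg \<beta>)" using eqn b0 by (simp add: rcis_def cis_divide[symmetric])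
    finally show ?thesis .
  qed
  moreover have "\<gamma> / 4 \<le> cmod (1 - cis (Arg \<alpha> - Arg \<beta>))"
  proof (rule norm_one_minus_cis[OF g d])
    have a1: "- pi < Arg \<alpha>" "Arg \<alpha> \<le> pi" "- pi < Arg \<beta>" "Arg \<beta> \<le> pi"
      using Arg_bounded[of \<alpha>] Arg_bounded[of \<beta>] by auto
    have "\<bar>pi - Arg \<alpha>\<bar> = pi - Arg \<alpha>" "\<bar>pi - Arg \<beta>\<bar> = pi - Arg \<beta>" using a1 by auto
    then have "Arg \<alpha> \<le> pi - \<gamma>" "Arg \<beta> \<le> pi - \<gamma>" using pa pb by linarith+
    then have "Arg \<alpha> - Arg \<beta> \<le> 2 * pi - \<gamma>" "- (2 * pi - \<gamma>) \<le> Arg \<alpha> - Arg \<beta>" using a1 by linarith+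
    then show "\<bar>Arg \<alpha> - Arg \<beta>\<bar> \<le> 2 * pi - \<gamma>" by (simp add: abs_le_iff)
  qed
  ultimately show ?thesis by simp
qed




lemma zeros_count:
  fixes c :: "nat \<Rightarrow> complex" and d :: nat
  assumes c0: "c 0 \<noteq> 0" and cd: "\<And>n. n \<ge> d \<Longrightarrow> c n = 0"
  shows "finite {z. (\<Sum>n. c n * z ^ n) = 0}"
    and "(\<Sum>z | (\<Sum>n. c n * z ^ n) = 0. nat (zorder (\<lambda>u. \<Sum>n. c n * u ^ n) z)) \<le> d"
proof -
  define P where "P = (\<Sum>i<d. Polynomial.monom (c i) i)"
  have fP: "(\<Sum>n. c n * u ^ n) = Polynomial.poly P u" for u
  proof -
    have "(\<Sum>n. c n * u ^ n) = (\<Sum>n<d. c n * u ^ n)"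
      by (rule suminf_finite) (auto simp: cd)
    also have "\<dots> = Polynomial.poly P u" by (simp add: P_def poly_sum poly_monom)
    finally show ?thesis .
  qed
  have fP': "(\<lambda>u. \<Sum>n. c n * u ^ n) = Polynomial.poly P" using fP by auto
  have coeffP: "Polynomial.coeff P i = (if i < d then c i else 0)" for i
    by (simp add: P_def Polynomial.coeff_sum Polynomial.coeff_monom)
  have d0: "d > 0" using c0 cd[of 0] by (cases d) auto
  have P0: "P \<noteq> 0"
  proof
    assume "P = 0"
    then have "Polynomial.coeff P 0 = 0" by simp
    then show False using coeffP[of 0] d0 c0 by simp
  qed
  have degP: "Polynomial.degree P \<le> d"
    by (rule Polynomial.degree_le) (auto simp: coeffP)
  show "finite {z. (\<Sum>n. c n * z ^ n) = 0}" unfolding fP using poly_roots_finite[OF P0] .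
  have zo: "zorder (Polynomial.poly P) z = int (Polynomial.order z P)" for z
  proof -
    obtain q where q: "P = [:- z, 1:] ^ Polynomial.order z P * q" "\<not> [:- z, 1:] dvd q"
      using order_decomp[OF P0] by blast
    have qz: "Polynomial.poly q z \<noteq> 0" using q(2) by (simp add: poly_eq_0_iff_dvd)
    show ?thesis
    proof (rule zorder_eqI[where S=UNIV and g="Polynomial.poly q"])
      show "Polynomial.poly q holomorphic_on UNIV" by (auto intro: holomorphic_intros)
      fix w :: complex
      show "Polynomial.poly P w = Polynomial.poly q w * (w - z) powi int (Polynomial.order z P)"
        by (subst q(1)) (simp add: power_int_of_nat mult.commute)
    qed (use qz in auto)
  qed
  have "(\<Sum>z | (\<Sum>n. c n * z ^ n) = 0. nat (zorder (\<lambda>u. \<Sum>n. c n * u ^ n) z))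
        = (\<Sum>z | Polynomial.poly P z = 0. Polynomial.order z P)"
    unfolding fP' fP by (intro sum.cong) (auto simp: zo)
  also have "\<dots> \<le> Polynomial.degree P" by (rule sum_order_le_degree[OF P0])
  finally show "(\<Sum>z | (\<Sum>n. c n * z ^ n) = 0. nat (zorder (\<lambda>u. \<Sum>n. c n * u ^ n) z)) \<le> d"
    using degP by linarith
qed




lemma pow_sum_le:
  fixes m :: "'b \<Rightarrow> nat"
  assumes fin: "finite Z" and ms: "(\<Sum>x\<in>Z. m x) \<le> D"
  shows "(\<Sum>x\<in>Z. real (m x) ^ Suc i) \<le> real D ^ Suc i"
proof -
  have "(\<Sum>x\<in>Z. real (m x) ^ Suc i) \<le> (\<Sum>x\<in>Z. real (m x) * real D ^ i)"
  proof (intro sum_mono)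
    fix x assume x: "x \<in> Z"
    have "m x \<le> (\<Sum>x\<in>Z. m x)" using fin x by (intro member_le_sum) auto
    then have "real (m x) \<le> real D" using ms by linarith
    then have "real (m x) ^ i \<le> real D ^ i" by (intro power_mono) auto
    then show "real (m x) ^ Suc i \<le> real (m x) * real D ^ i" by (simp add: mult_left_mono)
  qed
  also have "\<dots> = real (\<Sum>x\<in>Z. m x) * real D ^ i" by (simp add: sum_distrib_right)
  also have "\<dots> \<le> real D * real D ^ i" using ms by (intro mult_right_mono) (auto simp flip: of_nat_sum)
  finally show ?thesis by simp
qed


lemma offdiag_T:
  fixes \<alpha> \<beta> :: complex and \<gamma> s :: real and n j :: nat
  assumes a: "cmod \<alpha> = s" and b: "cmod \<beta> = s" and s0: "s > 0" and ne: "\<alpha> \<noteq> \<beta>"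
    and g0: "\<gamma> > 0" and sp: "\<gamma>/4 \<le> cmod (1 - \<alpha>/\<beta>)" and n: "n \<ge> 2"
  shows "cmod (\<Sum>i=1..<n. \<alpha> ^ i * \<beta> ^ (n - i) * of_real (ln (real i) ^ j / (real i * (real n - real i))))
          \<le> s ^ n * (32 / \<gamma>) * ln (real n) ^ j / real n"
proof -
  define w where "w = \<alpha> / \<beta>"
  have b0: "\<beta> \<noteq> 0" using b s0 by auto
  have w1: "cmod w = 1" using a b s0 by (simp add: w_def norm_divide)
  have wne: "w \<noteq> 1" using ne b0 by (simp add: w_def)
  have e: "(\<Sum>i=1..<n. \<alpha> ^ i * \<beta> ^ (n - i) * of_real (ln (real i) ^ j / (real i * (real n - real i))))
      = \<beta> ^ n * (\<Sum>i=1..<n. w ^ i * of_real (ln (real i) ^ j / (real i * (real n - real i))))"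
    unfolding sum_distrib_left
  proof (intro sum.cong refl)
    fix i assume i: "i \<in> {1..<n}"
    have "\<beta> ^ n = \<beta> ^ i * \<beta> ^ (n - i)" using i by (simp add: power_add[symmetric])
    then have "\<beta> ^ n * w ^ i = \<alpha> ^ i * \<beta> ^ (n - i)" using b0 by (simp add: w_def power_divide)
    then show "\<alpha> ^ i * \<beta> ^ (n - i) * of_real (ln (real i) ^ j / (real i * (real n - real i))) =
        \<beta> ^ n * (w ^ i * of_real (ln (real i) ^ j / (real i * (real n - real i))))"
      by (simp add: mult.assoc)
  qed
  have ob: "cmod (\<Sum>i=1..<n. w ^ i * of_real (ln (real i) ^ j / (real i * (real n - real i))))
           \<le> 8 / cmod (1 - w) * ln (real n) ^ j / real n"
    by (rule offdiag_bound[OF w1 wne n])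
  have cw: "\<gamma> / 4 \<le> cmod (1 - w)" using sp by (simp add: w_def)
  then have cw0: "0 < cmod (1 - w)" using g0 by linarith
  have "8 / cmod (1 - w) \<le> 8 / (\<gamma> / 4)" using cw cw0 g0 by (intro divide_left_mono) auto
  then have "8 / cmod (1 - w) * ln (real n) ^ j / real n \<le> (32 / \<gamma>) * ln (real n) ^ j / real n"
    using n by (intro divide_right_mono mult_right_mono) auto
  with ob have ob2: "cmod (\<Sum>i=1..<n. w ^ i * of_real (ln (real i) ^ j / (real i * (real n - real i))))
           \<le> (32 / \<gamma>) * ln (real n) ^ j / real n" by linarith
  show ?thesis unfolding e norm_mult norm_power b
    using mult_left_mono[OF ob2, of "s ^ n"] s0 by (simp add: mult.assoc)
qed

lemma main_abstract:
  fixes Z :: "complex set" and m :: "complex \<Rightarrow> nat" and s \<gamma> :: real and D k n :: nat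
    and Zf :: "nat \<Rightarrow> nat \<Rightarrow> complex"
  assumes fin: "finite Z" and md: "\<And>\<alpha>. \<alpha> \<in> Z \<Longrightarrow> cmod \<alpha> = s" and s0: "s > 0"
    and ms: "(\<Sum>\<alpha>\<in>Z. m \<alpha>) \<le> D" and g0: "\<gamma> > 0"
    and sep: "\<And>\<alpha> \<beta>. \<alpha> \<in> Z \<Longrightarrow> \<beta> \<in> Z \<Longrightarrow> \<alpha> \<noteq> \<beta> \<Longrightarrow> \<gamma>/4 \<le> cmod (1 - \<alpha>/\<beta>)"
    and k: "k \<ge> 2" and n: "n \<ge> 2"
    and Zf: "\<And>l i. Zf l i = (-1) ^ l / of_nat (fact (l - 1)) *
     (\<Sum>\<alpha> \<in> Z. of_nat (m \<alpha>) ^ l * \<alpha> ^ i * of_real (ln (real i)) ^ (l - 1) / of_nat i)"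
  shows "cmod ((\<Sum>n1 = 1..n - 1. Zf (k - 1) n1 * Zf 1 (n - n1))
           - (-1) ^ k * of_nat k / of_nat (fact (k - 1)) *
             (\<Sum>\<alpha> \<in> Z. of_nat (m \<alpha>) ^ k * \<alpha> ^ n *
                of_real (ln (real n)) ^ (k - 1) / of_nat n))
       \<le> real k / real (fact (k - 1)) *
         (40 * real D ^ k * (real k + 1 / \<gamma>) * s ^ n * ln (real n) ^ (k - 2) / real n)"
proof -
  obtain j where kj: "k = j + 2" using k by (metis add.commute le_Suc_ex)
  define L where "L = ln (real n)"
  define g where "g = (\<lambda>i::nat. ln (real i) ^ j / (real i * (real n - real i)))"
  define T where "T = (\<lambda>\<alpha> \<beta>::complex. \<Sum>i=1..<n. \<alpha> ^ i * \<beta> ^ (n - i) * of_real (g i))"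
  define a where "a = (\<lambda>\<alpha>. of_nat (m \<alpha>) :: complex)"
  define c where "c = ((-1) ^ k / of_nat (fact j) :: complex)"
  define G where "G = (\<Sum>i=1..<n. g i)"
  define H where "H = (1 / real (Suc j) + 1) * L ^ Suc j / real n"
  have L0: "0 \<le> L" using n by (simp add: L_def)
  have ivl: "{1..n-1} = {1..<n}" using n by auto
  have Zk: "Zf (k-1) i = (-1) ^ (k-1) / of_nat (fact j) * (\<Sum>\<alpha>\<in>Z. a \<alpha> ^ (k-1) * \<alpha> ^ i * of_real (ln (real i) ^ j / real i))" for i
    unfolding Zf a_def by (simp add: kj of_real_divide of_real_power)
  have Z1: "Zf 1 i = - (\<Sum>\<beta>\<in>Z. a \<beta> * \<beta> ^ i * of_real (1 / real i))" for i
    unfolding Zf a_def by (simp add: of_real_divide sum_negf)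
  have sgn: "(-1) ^ (k-1) / of_nat (fact j) * (-1) = c"
  proof -
    have "(-1::complex) ^ k = (-1) ^ (k-1) * (-1)" using kj by (simp add: power_Suc2[symmetric])
    then show ?thesis by (simp add: c_def)
  qed
  have prod: "Zf (k-1) i * Zf 1 (n-i) = c * (\<Sum>\<alpha>\<in>Z. \<Sum>\<beta>\<in>Z. a \<alpha> ^ (k-1) * a \<beta> * (\<alpha> ^ i * \<beta> ^ (n-i) * of_real (g i)))"
    if i: "i \<in> {1..<n}" for i
  proof -
    have er: "ln (real i) ^ j / real i * (1 / real (n-i)) = g i" using i by (simp add: g_def of_nat_diff)
    have ec: "(of_real (ln (real i) ^ j / real i) :: complex) * of_real (1 / real (n-i)) = of_real (g i)"
      by (simp only: er[symmetric] of_real_mult)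
    have "Zf (k-1) i * Zf 1 (n-i) = ((-1) ^ (k-1) / of_nat (fact j) * (-1)) *
        ((\<Sum>\<alpha>\<in>Z. a \<alpha> ^ (k-1) * \<alpha> ^ i * of_real (ln (real i) ^ j / real i)) *
         (\<Sum>\<beta>\<in>Z. a \<beta> * \<beta> ^ (n-i) * of_real (1 / real (n-i))))"
      unfolding Zk Z1 by (simp add: algebra_simps)
    also have "\<dots> = c * (\<Sum>\<alpha>\<in>Z. \<Sum>\<beta>\<in>Z. (a \<alpha> ^ (k-1) * \<alpha> ^ i * of_real (ln (real i) ^ j / real i)) *
         (a \<beta> * \<beta> ^ (n-i) * of_real (1 / real (n-i))))"
      unfolding sgn sum_product ..
    also have "\<dots> = c * (\<Sum>\<alpha>\<in>Z. \<Sum>\<beta>\<in>Z. a \<alpha> ^ (k-1) * a \<beta> * (\<alpha> ^ i * \<beta> ^ (n-i) * of_real (g i)))"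
    proof -
      have "(a \<alpha> ^ (k-1) * \<alpha> ^ i * of_real (ln (real i) ^ j / real i)) *
         (a \<beta> * \<beta> ^ (n-i) * of_real (1 / real (n-i))) =
         a \<alpha> ^ (k-1) * a \<beta> * (\<alpha> ^ i * \<beta> ^ (n-i) * (of_real (ln (real i) ^ j / real i) * of_real (1 / real (n-i))))"
        for \<alpha> \<beta> by (simp only: mult_ac)
      then show ?thesis unfolding ec by simp
    qed
    finally show ?thesis .
  qed
  have E1: "(\<Sum>n1 = 1..n - 1. Zf (k - 1) n1 * Zf 1 (n - n1)) = c * (\<Sum>\<alpha>\<in>Z. \<Sum>\<beta>\<in>Z. a \<alpha> ^ (k-1) * a \<beta> * T \<alpha> \<beta>)"
  proof -
    have "(\<Sum>n1 = 1..n - 1. Zf (k - 1) n1 * Zf 1 (n - n1)) =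
        (\<Sum>i\<in>{1..<n}. c * (\<Sum>\<alpha>\<in>Z. \<Sum>\<beta>\<in>Z. a \<alpha> ^ (k-1) * a \<beta> * (\<alpha> ^ i * \<beta> ^ (n-i) * of_real (g i))))"
      unfolding ivl by (intro sum.cong refl prod)
    also have "\<dots> = c * (\<Sum>i\<in>{1..<n}. \<Sum>\<alpha>\<in>Z. \<Sum>\<beta>\<in>Z. a \<alpha> ^ (k-1) * a \<beta> * (\<alpha> ^ i * \<beta> ^ (n-i) * of_real (g i)))"
      by (simp add: sum_distrib_left)
    also have "(\<Sum>i\<in>{1..<n}. \<Sum>\<alpha>\<in>Z. \<Sum>\<beta>\<in>Z. a \<alpha> ^ (k-1) * a \<beta> * (\<alpha> ^ i * \<beta> ^ (n-i) * of_real (g i)))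
        = (\<Sum>\<alpha>\<in>Z. \<Sum>\<beta>\<in>Z. \<Sum>i\<in>{1..<n}. a \<alpha> ^ (k-1) * a \<beta> * (\<alpha> ^ i * \<beta> ^ (n-i) * of_real (g i)))"
    proof -
      have "(\<Sum>i\<in>{1..<n}. \<Sum>\<alpha>\<in>Z. \<Sum>\<beta>\<in>Z. a \<alpha> ^ (k-1) * a \<beta> * (\<alpha> ^ i * \<beta> ^ (n-i) * of_real (g i)))
        = (\<Sum>\<alpha>\<in>Z. \<Sum>i\<in>{1..<n}. \<Sum>\<beta>\<in>Z. a \<alpha> ^ (k-1) * a \<beta> * (\<alpha> ^ i * \<beta> ^ (n-i) * of_real (g i)))"
        by (rule sum.swap)
      also have "\<dots> = (\<Sum>\<alpha>\<in>Z. \<Sum>\<beta>\<in>Z. \<Sum>i\<in>{1..<n}. a \<alpha> ^ (k-1) * a \<beta> * (\<alpha> ^ i * \<beta> ^ (n-i) * of_real (g i)))"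
        by (rule sum.cong[OF refl]) (rule sum.swap)
      finally show ?thesis .
    qed
    also have "\<dots> = (\<Sum>\<alpha>\<in>Z. \<Sum>\<beta>\<in>Z. a \<alpha> ^ (k-1) * a \<beta> * T \<alpha> \<beta>)"
      by (simp add: T_def sum_distrib_left)
    finally show ?thesis .
  qed
  have kfac: "(-1) ^ k * of_nat k / of_nat (fact (k - 1)) = c * (of_real (1 / real (Suc j) + 1) :: complex)"
  proof -
    have f: "fact (k - 1) = Suc j * fact j" using kj by simp
    have fj: "(of_nat (fact j) :: complex) \<noteq> 0" by simp
    show ?thesis unfolding c_def f using fj kj by (simp add: field_simps)
  qed
  have E2: "(-1) ^ k * of_nat k / of_nat (fact (k - 1)) *
             (\<Sum>\<alpha> \<in> Z. of_nat (m \<alpha>) ^ k * \<alpha> ^ n * of_real (ln (real n)) ^ (k - 1) / of_nat n)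
        = c * (\<Sum>\<alpha>\<in>Z. a \<alpha> ^ k * \<alpha> ^ n * of_real H)"
  proof -
    have "(\<Sum>\<alpha> \<in> Z. of_nat (m \<alpha>) ^ k * \<alpha> ^ n * of_real (ln (real n)) ^ (k - 1) / of_nat n) * of_real (1 / real (Suc j) + 1)
        = (\<Sum>\<alpha>\<in>Z. a \<alpha> ^ k * \<alpha> ^ n * of_real H)"
      unfolding sum_distrib_right
    proof (intro sum.cong refl)
      fix \<alpha> assume "\<alpha> \<in> Z"
      have "(of_real H :: complex) = of_real (ln (real n)) ^ Suc j / of_nat n * of_real (1 / real (Suc j) + 1)"
        by (simp add: H_def L_def of_real_divide of_real_power of_real_mult)
      then show "of_nat (m \<alpha>) ^ k * \<alpha> ^ n * of_real (ln (real n)) ^ (k - 1) / of_nat n * of_real (1 / real (Suc j) + 1) =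
          a \<alpha> ^ k * \<alpha> ^ n * of_real H"
        using kj by (simp add: a_def)
    qed
    then show ?thesis unfolding kfac by (simp add: mult.assoc mult.commute)
  qed
  have Tdiag: "T \<alpha> \<alpha> = \<alpha> ^ n * of_real G" for \<alpha>
  proof -
    have "T \<alpha> \<alpha> = (\<Sum>i=1..<n. \<alpha> ^ n * of_real (g i))"
      unfolding T_def by (intro sum.cong refl) (simp add: power_add[symmetric])
    also have "\<dots> = \<alpha> ^ n * of_real G" by (simp add: G_def sum_distrib_left)
    finally show ?thesis .
  qed
  have E3: "(\<Sum>\<alpha>\<in>Z. \<Sum>\<beta>\<in>Z. a \<alpha> ^ (k-1) * a \<beta> * T \<alpha> \<beta>) =
      (\<Sum>\<alpha>\<in>Z. a \<alpha> ^ k * \<alpha> ^ n * of_real G) + (\<Sum>\<alpha>\<in>Z. \<Sum>\<beta>\<in>Z - {\<alpha>}. a \<alpha> ^ (k-1) * a \<beta> * T \<alpha> \<beta>)"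
  proof -
    have "(\<Sum>\<alpha>\<in>Z. \<Sum>\<beta>\<in>Z. a \<alpha> ^ (k-1) * a \<beta> * T \<alpha> \<beta>) =
      (\<Sum>\<alpha>\<in>Z. a \<alpha> ^ k * \<alpha> ^ n * of_real G + (\<Sum>\<beta>\<in>Z - {\<alpha>}. a \<alpha> ^ (k-1) * a \<beta> * T \<alpha> \<beta>))"
    proof (intro sum.cong refl)
      fix \<alpha> assume al: "\<alpha> \<in> Z"
      have "a \<alpha> ^ (k-1) * a \<alpha> = a \<alpha> ^ k" using kj by (simp add: power_Suc2[symmetric])
      then have "a \<alpha> ^ (k-1) * a \<alpha> * T \<alpha> \<alpha> = a \<alpha> ^ k * \<alpha> ^ n * of_real G" by (simp add: Tdiag mult.assoc)
      then show "(\<Sum>\<beta>\<in>Z. a \<alpha> ^ (k-1) * a \<beta> * T \<alpha> \<beta>) =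
          a \<alpha> ^ k * \<alpha> ^ n * of_real G + (\<Sum>\<beta>\<in>Z - {\<alpha>}. a \<alpha> ^ (k-1) * a \<beta> * T \<alpha> \<beta>)"
        using sum.remove[OF fin al, of "\<lambda>\<beta>. a \<alpha> ^ (k-1) * a \<beta> * T \<alpha> \<beta>"] by simp
    qed
    also have "\<dots> = (\<Sum>\<alpha>\<in>Z. a \<alpha> ^ k * \<alpha> ^ n * of_real G) + (\<Sum>\<alpha>\<in>Z. \<Sum>\<beta>\<in>Z - {\<alpha>}. a \<alpha> ^ (k-1) * a \<beta> * T \<alpha> \<beta>)"
      by (rule sum.distrib)
    finally show ?thesis .
  qed
  define XX where "XX = (\<Sum>\<alpha>\<in>Z. a \<alpha> ^ k * \<alpha> ^ n * of_real (G - H))"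
  define YY where "YY = (\<Sum>\<alpha>\<in>Z. \<Sum>\<beta>\<in>Z - {\<alpha>}. a \<alpha> ^ (k-1) * a \<beta> * T \<alpha> \<beta>)"
  have diff: "(\<Sum>n1 = 1..n - 1. Zf (k - 1) n1 * Zf 1 (n - n1))
           - (-1) ^ k * of_nat k / of_nat (fact (k - 1)) *
             (\<Sum>\<alpha> \<in> Z. of_nat (m \<alpha>) ^ k * \<alpha> ^ n * of_real (ln (real n)) ^ (k - 1) / of_nat n)
        = c * (XX + YY)"
  proof -
    have XXe: "XX = (\<Sum>\<alpha>\<in>Z. a \<alpha> ^ k * \<alpha> ^ n * of_real G) - (\<Sum>\<alpha>\<in>Z. a \<alpha> ^ k * \<alpha> ^ n * of_real H)"
      unfolding XX_def sum_subtractf[symmetric] by (intro sum.cong refl) (simp add: of_real_diff algebra_simps)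
    show ?thesis unfolding E1 E2 E3 YY_def XXe by (simp add: algebra_simps)
  qed
  define Q where "Q = s ^ n * L ^ j / real n"
  have Q0: "0 \<le> Q" using s0 L0 n by (simp add: Q_def)
  have GH: "\<bar>G - H\<bar> \<le> 7 * real k * L ^ j / real n"
    using diag_bound[OF n, of j] kj by (simp add: G_def H_def g_def L_def)
  have Xb: "cmod XX \<le> real D ^ k * (7 * real k) * Q"
  proof -
    have "cmod XX \<le> (\<Sum>\<alpha>\<in>Z. cmod (a \<alpha> ^ k * \<alpha> ^ n * of_real (G - H)))" unfolding XX_def by (rule norm_sum)
    also have "\<dots> \<le> (\<Sum>\<alpha>\<in>Z. real (m \<alpha>) ^ k * (7 * real k * Q))"
    proof (intro sum_mono)
      fix \<alpha> assume al: "\<alpha> \<in> Z"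
      have "cmod (a \<alpha> ^ k * \<alpha> ^ n * of_real (G - H)) = real (m \<alpha>) ^ k * (s ^ n * \<bar>G - H\<bar>)"
        using md[OF al] by (simp add: a_def norm_mult norm_power del: of_real_diff)
      also have "\<dots> \<le> real (m \<alpha>) ^ k * (s ^ n * (7 * real k * L ^ j / real n))"
        using GH s0 by (intro mult_left_mono) auto
      also have "s ^ n * (7 * real k * L ^ j / real n) = 7 * real k * Q" by (simp add: Q_def)
      finally show "cmod (a \<alpha> ^ k * \<alpha> ^ n * of_real (G - H)) \<le> real (m \<alpha>) ^ k * (7 * real k * Q)" .
    qed
    also have "\<dots> = (\<Sum>\<alpha>\<in>Z. real (m \<alpha>) ^ k) * (7 * real k * Q)" by (simp add: sum_distrib_right)
    also have "\<dots> \<le> real D ^ k * (7 * real k * Q)"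
      using pow_sum_le[OF fin ms, of "Suc j"] kj Q0 by (intro mult_right_mono) auto
    finally show ?thesis by simp
  qed
  have Yb: "cmod YY \<le> real D ^ k * (32 / \<gamma>) * Q"
  proof -
    have Tb: "cmod (T \<alpha> \<beta>) \<le> (32 / \<gamma>) * Q" if "\<alpha> \<in> Z" "\<beta> \<in> Z" "\<alpha> \<noteq> \<beta>" for \<alpha> \<beta>
    proof -
      have "cmod (T \<alpha> \<beta>) \<le> s ^ n * (32 / \<gamma>) * ln (real n) ^ j / real n"
        unfolding T_def g_def by (rule offdiag_T[OF md[OF that(1)] md[OF that(2)] s0 that(3) g0 sep[OF that] n])
      also have "\<dots> = (32 / \<gamma>) * Q" by (simp add: Q_def L_def)
      finally show ?thesis .
    qed
    have "cmod YY \<le> (\<Sum>\<alpha>\<in>Z. \<Sum>\<beta>\<in>Z - {\<alpha>}. cmod (a \<alpha> ^ (k-1) * a \<beta> * T \<alpha> \<beta>))"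
      unfolding YY_def by (rule order_trans[OF norm_sum sum_mono[OF norm_sum]])
    also have "\<dots> \<le> (\<Sum>\<alpha>\<in>Z. \<Sum>\<beta>\<in>Z. real (m \<alpha>) ^ (k-1) * real (m \<beta>) * ((32 / \<gamma>) * Q))"
    proof (intro sum_mono)
      fix \<alpha> assume al: "\<alpha> \<in> Z"
      have "(\<Sum>\<beta>\<in>Z - {\<alpha>}. cmod (a \<alpha> ^ (k-1) * a \<beta> * T \<alpha> \<beta>))
          \<le> (\<Sum>\<beta>\<in>Z - {\<alpha>}. real (m \<alpha>) ^ (k-1) * real (m \<beta>) * ((32 / \<gamma>) * Q))"
      proof (intro sum_mono)
        fix \<beta> assume be: "\<beta> \<in> Z - {\<alpha>}"
        have "cmod (a \<alpha> ^ (k-1) * a \<beta> * T \<alpha> \<beta>) = real (m \<alpha>) ^ (k-1) * real (m \<beta>) * cmod (T \<alpha> \<beta>)"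
          by (simp add: a_def norm_mult norm_power)
        also have "\<dots> \<le> real (m \<alpha>) ^ (k-1) * real (m \<beta>) * ((32 / \<gamma>) * Q)"
          using Tb[OF al _ ] be by (intro mult_left_mono) auto
        finally show "cmod (a \<alpha> ^ (k-1) * a \<beta> * T \<alpha> \<beta>) \<le> real (m \<alpha>) ^ (k-1) * real (m \<beta>) * ((32 / \<gamma>) * Q)" .
      qed
      also have "\<dots> \<le> (\<Sum>\<beta>\<in>Z. real (m \<alpha>) ^ (k-1) * real (m \<beta>) * ((32 / \<gamma>) * Q))"
        using fin Q0 g0 by (intro sum_mono2) auto
      finally show "(\<Sum>\<beta>\<in>Z - {\<alpha>}. cmod (a \<alpha> ^ (k-1) * a \<beta> * T \<alpha> \<beta>))
          \<le> (\<Sum>\<beta>\<in>Z. real (m \<alpha>) ^ (k-1) * real (m \<beta>) * ((32 / \<gamma>) * Q))" .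
    qed
    also have "\<dots> = (\<Sum>\<alpha>\<in>Z. real (m \<alpha>) ^ (k-1)) * (\<Sum>\<beta>\<in>Z. real (m \<beta>)) * ((32 / \<gamma>) * Q)"
      by (simp only: sum_distrib_left sum_distrib_right, (rule sum.swap)?)
    also have "\<dots> \<le> real D ^ (k-1) * real D * ((32 / \<gamma>) * Q)"
    proof -
      have p1: "(\<Sum>\<alpha>\<in>Z. real (m \<alpha>) ^ (k-1)) \<le> real D ^ (k-1)"
        using pow_sum_le[OF fin ms, of j] kj by simp
      have p2: "(\<Sum>\<beta>\<in>Z. real (m \<beta>)) \<le> real D" using ms by (simp flip: of_nat_sum)
      show ?thesis using Q0 g0 p1 p2
        by (intro mult_right_mono mult_mono) (auto intro: sum_nonneg)
    qed
    also have "real D ^ (k-1) * real D = real D ^ k" using kj by (simp add: power_Suc2[symmetric])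
    finally show ?thesis by (simp add: mult.assoc)
  qed
  have "cmod (c * (XX + YY)) = (1 / real (fact j)) * cmod (XX + YY)"
    by (simp add: c_def norm_mult norm_divide norm_power)
  also have "\<dots> \<le> (1 / real (fact j)) * (real D ^ k * (7 * real k + 32 / \<gamma>) * Q)"
  proof -
    have "cmod (XX + YY) \<le> cmod XX + cmod YY" by (rule norm_triangle_ineq)
    also have "\<dots> \<le> real D ^ k * (7 * real k) * Q + real D ^ k * (32 / \<gamma>) * Q" using Xb Yb by linarith
    also have "\<dots> = real D ^ k * (7 * real k + 32 / \<gamma>) * Q" by (simp add: algebra_simps)
    finally show ?thesis by (intro mult_left_mono) auto
  qed
  also have "\<dots> \<le> (real k / real (fact (k - 1))) * (real D ^ k * (40 * (real k + 1 / \<gamma>)) * Q)"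
  proof (rule mult_mono)
    have f: "fact (k - 1) = Suc j * fact j" using kj by simp
    have "real (fact (k-1)) \<le> real k * real (fact j)" unfolding f using kj fact_ge_zero[of j, where 'a=real] by (simp add: algebra_simps)
    moreover have "0 < real (fact j)" "0 < real (fact (k - 1))" by simp_all
    ultimately show "1 / real (fact j) \<le> real k / real (fact (k - 1))"
      by (simp add: field_simps)
    have "32 / \<gamma> \<le> 40 / \<gamma>" using g0 by (intro divide_right_mono) auto
    then have "7 * real k + 32 / \<gamma> \<le> 40 * (real k + 1 / \<gamma>)" by (simp add: algebra_simps)
    then show "real D ^ k * (7 * real k + 32 / \<gamma>) * Q \<le> real D ^ k * (40 * (real k + 1 / \<gamma>)) * Q"
      using Q0 by (intro mult_right_mono mult_left_mono) auto
    show "0 \<le> real k / real (fact (k - 1))" by simp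
    show "0 \<le> real D ^ k * (7 * real k + 32 / \<gamma>) * Q" using Q0 g0 by simp
  qed
  also have "\<dots> = real k / real (fact (k - 1)) *
         (40 * real D ^ k * (real k + 1 / \<gamma>) * s ^ n * ln (real n) ^ (k - 2) / real n)"
    using kj by (simp add: Q_def L_def)
  finally show ?thesis unfolding diff .
qed




context
  fixes R :: "'a ring" (structure)
  assumes fR: "field R"
begin

interpretation field R by (rule fR)

lemma cancel_coprime:
  assumes b: "b \<in> carrier (poly_ring R)" and M: "M \<in> carrier (poly_ring R)"
    and x: "x \<in> carrier (poly_ring R)"
    and cop: "pcoprime R b M" and dv: "M pdivides (b \<otimes>\<^bsub>poly_ring R\<^esub> x)"
  shows "M pdivides x"
proof -
  interpret UP: principal_domain "poly_ring R"
    using univ_poly_is_principal[OF carrier_is_subfield] .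
  obtain c where c: "c \<in> carrier (poly_ring R)"
    "PIdl\<^bsub>poly_ring R\<^esub> c = PIdl\<^bsub>poly_ring R\<^esub> b <+>\<^bsub>poly_ring R\<^esub> PIdl\<^bsub>poly_ring R\<^esub> M"
    using UP.exists_gen[OF UP.add_ideals[OF UP.cgenideal_ideal[OF b] UP.cgenideal_ideal[OF M]]] by blast
  have "c gcdof\<^bsub>poly_ring R\<^esub> b M" using UP.ideal_sum_iff_gcd[OF b M c(1)] c(2) by simp
  then have "c pdivides b" "c pdivides M" unfolding isgcd_def pdivides_def by auto
  then have cu: "c \<in> Units (poly_ring R)" using cop c(1) unfolding pcoprime_def by blast
  have "\<one>\<^bsub>poly_ring R\<^esub> \<in> PIdl\<^bsub>poly_ring R\<^esub> c"
  proof -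
    have e: "\<one>\<^bsub>poly_ring R\<^esub> = inv\<^bsub>poly_ring R\<^esub> c \<otimes>\<^bsub>poly_ring R\<^esub> c"
      by (rule UP.Units_l_inv[OF cu, symmetric])
    have "inv\<^bsub>poly_ring R\<^esub> c \<in> carrier (poly_ring R)" by (rule UP.Units_inv_closed[OF cu])
    then show ?thesis unfolding cgenideal_def using e by blast
  qed
  then obtain u v where uv: "u \<in> carrier (poly_ring R)" "v \<in> carrier (poly_ring R)"
    "\<one>\<^bsub>poly_ring R\<^esub> = (u \<otimes>\<^bsub>poly_ring R\<^esub> b) \<oplus>\<^bsub>poly_ring R\<^esub> (v \<otimes>\<^bsub>poly_ring R\<^esub> M)"
  proof -
    assume H: "\<And>u v. \<lbrakk>u \<in> carrier (poly_ring R); v \<in> carrier (poly_ring R);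
      \<one>\<^bsub>poly_ring R\<^esub> = (u \<otimes>\<^bsub>poly_ring R\<^esub> b) \<oplus>\<^bsub>poly_ring R\<^esub> (v \<otimes>\<^bsub>poly_ring R\<^esub> M)\<rbrakk> \<Longrightarrow> thesis"
    have "\<one>\<^bsub>poly_ring R\<^esub> \<in> PIdl\<^bsub>poly_ring R\<^esub> b <+>\<^bsub>poly_ring R\<^esub> PIdl\<^bsub>poly_ring R\<^esub> M"
      using \<open>\<one>\<^bsub>poly_ring R\<^esub> \<in> PIdl\<^bsub>poly_ring R\<^esub> c\<close> c(2) by simp
    then obtain h k where hk: "h \<in> PIdl\<^bsub>poly_ring R\<^esub> b" "k \<in> PIdl\<^bsub>poly_ring R\<^esub> M"
      "\<one>\<^bsub>poly_ring R\<^esub> = h \<oplus>\<^bsub>poly_ring R\<^esub> k"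
      unfolding set_add_def' by auto
    from hk(1) obtain u where u: "u \<in> carrier (poly_ring R)" "h = u \<otimes>\<^bsub>poly_ring R\<^esub> b"
      unfolding cgenideal_def by auto
    from hk(2) obtain v where v: "v \<in> carrier (poly_ring R)" "k = v \<otimes>\<^bsub>poly_ring R\<^esub> M"
      unfolding cgenideal_def by auto
    show thesis using H[OF u(1) v(1)] hk(3) u(2) v(2) by simp
  qed
  obtain k where k: "k \<in> carrier (poly_ring R)" "b \<otimes>\<^bsub>poly_ring R\<^esub> x = M \<otimes>\<^bsub>poly_ring R\<^esub> k"
    using dv unfolding pdivides_def factor_def by blast
  have "x = \<one>\<^bsub>poly_ring R\<^esub> \<otimes>\<^bsub>poly_ring R\<^esub> x" using x by simp
  also have "\<dots> = ((u \<otimes>\<^bsub>poly_ring R\<^esub> b) \<oplus>\<^bsub>poly_ring R\<^esub> (v \<otimes>\<^bsub>poly_ring R\<^esub> M)) \<otimes>\<^bsub>poly_ring R\<^esub> x"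
    using uv(3) by simp
  also have "\<dots> = (u \<otimes>\<^bsub>poly_ring R\<^esub> (b \<otimes>\<^bsub>poly_ring R\<^esub> x)) \<oplus>\<^bsub>poly_ring R\<^esub> (M \<otimes>\<^bsub>poly_ring R\<^esub> (v \<otimes>\<^bsub>poly_ring R\<^esub> x))"
    using uv(1,2) b M x by algebra
  also have "\<dots> = M \<otimes>\<^bsub>poly_ring R\<^esub> ((u \<otimes>\<^bsub>poly_ring R\<^esub> k) \<oplus>\<^bsub>poly_ring R\<^esub> (v \<otimes>\<^bsub>poly_ring R\<^esub> x))"
    unfolding k(2) using uv(1,2) k(1) M x by algebra
  finally show ?thesis unfolding pdivides_def factor_def using uv(1,2) k(1) x by blast
qed

definition resW :: "'a list \<Rightarrow> 'a list set" where
  "resW M = {r \<in> carrier (poly_ring R). degree r < degree M}"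

lemma resW_finite:
  assumes "finite (carrier R)"
  shows "finite (resW M)"
proof (rule finite_subset)
  show "resW M \<subseteq> {xs. set xs \<subseteq> carrier R \<and> length xs \<le> degree M + 1}"
  proof
    fix r assume "r \<in> resW M"
    then have "polynomial (carrier R) r" "degree r < degree M"
      unfolding resW_def univ_poly_carrier by auto
    then show "r \<in> {xs. set xs \<subseteq> carrier R \<and> length xs \<le> degree M + 1}"
      using polynomial_incl by auto
  qed
  show "finite {xs. set xs \<subseteq> carrier R \<and> length xs \<le> degree M + 1}"
    using finite_lists_length_le[OF assms] .
qed

lemma pmod_in_resW:
  assumes a: "a \<in> carrier (poly_ring R)" and M: "M \<in> carrier (poly_ring R)" and d: "degree M \<ge> 1"
  shows "a pmod M \<in> resW M"
proof -
  have "M \<noteq> []" using d by auto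
  then have "a pmod M = [] \<or> degree (a pmod M) < degree M"
    using pmod_degree[OF carrier_is_subfield a M] by blast
  moreover have "a pmod M \<in> carrier (poly_ring R)"
    using long_division_closed(2)[OF carrier_is_subfield a M] .
  ultimately show ?thesis using d unfolding resW_def by auto
qed

lemma resW_pmod:
  assumes r: "r \<in> resW M" and M: "M \<in> carrier (poly_ring R)"
  shows "r pmod M = r"
  using pmod_const(2)[OF carrier_is_subfield _ M, of r] r unfolding resW_def by auto

lemma zero_in_resW:
  assumes "degree M \<ge> 1"
  shows "[] \<in> resW M"
  using assms unfolding resW_def by (auto simp: univ_poly_carrier[symmetric] polynomial_def)

lemma chi_pmod:
  assumes chi: "dirichlet_char R M chi" and a: "a \<in> carrier (poly_ring R)"
    and M: "M \<in> carrier (poly_ring R)" and d: "degree M \<ge> 1"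
  shows "chi (a pmod M) = chi a"
proof -
  have am: "a pmod M \<in> resW M" by (rule pmod_in_resW[OF a M d])
  then have amc: "a pmod M \<in> carrier (poly_ring R)" unfolding resW_def by simp
  have "a pmod M = (a pmod M) pmod M" using resW_pmod[OF am M] by simp
  then have "M pdivides (a \<ominus>\<^bsub>poly_ring R\<^esub> (a pmod M))"
    using same_pmod_iff_pdivides[OF carrier_is_subfield a amc M] by simp
  moreover have "\<forall>a\<in>carrier (poly_ring R). \<forall>b\<in>carrier (poly_ring R).
        M pdivides (a \<ominus>\<^bsub>poly_ring R\<^esub> b) \<longrightarrow> chi a = chi b"
    using chi unfolding dirichlet_char_def by blast
  ultimately show ?thesis using a amc by force
qed

lemma chi_cong:
  assumes chi: "dirichlet_char R M chi" and a: "a \<in> carrier (poly_ring R)" and b: "b \<in> carrier (poly_ring R)"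
    and M: "M \<in> carrier (poly_ring R)" and e: "a pmod M = b pmod M"
  shows "chi a = chi b"
proof -
  have "M pdivides (a \<ominus>\<^bsub>poly_ring R\<^esub> b)"
    using same_pmod_iff_pdivides[OF carrier_is_subfield a b M] e by simp
  moreover have "\<forall>a\<in>carrier (poly_ring R). \<forall>b\<in>carrier (poly_ring R).
        M pdivides (a \<ominus>\<^bsub>poly_ring R\<^esub> b) \<longrightarrow> chi a = chi b"
    using chi unfolding dirichlet_char_def by blast
  ultimately show ?thesis using a b by blast
qed

lemma resW_add:
  assumes r: "r \<in> resW M" and s: "s \<in> resW M"
  shows "r \<oplus>\<^bsub>poly_ring R\<^esub> s \<in> resW M"
proof -
  interpret UP: ring "poly_ring R" using univ_poly_is_ring[OF carrier_is_subring] .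
  have e: "r \<oplus>\<^bsub>poly_ring R\<^esub> s = poly_add r s" by (simp add: univ_poly_add)
  have dr: "degree r < degree M" "degree s < degree M" using r s unfolding resW_def by auto
  have "degree (r \<oplus>\<^bsub>poly_ring R\<^esub> s) \<le> max (degree r) (degree s)" unfolding e by (rule poly_add_degree)
  then have "degree (r \<oplus>\<^bsub>poly_ring R\<^esub> s) < degree M" using dr by linarith
  moreover have "r \<oplus>\<^bsub>poly_ring R\<^esub> s \<in> carrier (poly_ring R)" using r s unfolding resW_def by auto
  ultimately show ?thesis unfolding resW_def by blast
qed

lemma resW_neg:
  assumes r: "r \<in> resW M"
  shows "\<ominus>\<^bsub>poly_ring R\<^esub> r \<in> resW M"
proof -
  interpret UP: ring "poly_ring R" using univ_poly_is_ring[OF carrier_is_subring] .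
  have rc: "r \<in> carrier (poly_ring R)" using r unfolding resW_def by simp
  have "\<ominus>\<^bsub>poly_ring R\<^esub> r = map (\<lambda>a. \<ominus> a) r"
    by (rule univ_poly_a_inv_def'[OF carrier_is_subring rc])
  then have "degree (\<ominus>\<^bsub>poly_ring R\<^esub> r) = degree r" by simp
  moreover have "\<ominus>\<^bsub>poly_ring R\<^esub> r \<in> carrier (poly_ring R)" by (rule UP.a_inv_closed[OF rc])
  ultimately show ?thesis using r unfolding resW_def by auto
qed

lemma resW_shift_bij:
  assumes a: "a \<in> resW M"
  shows "bij_betw (\<lambda>r. a \<oplus>\<^bsub>poly_ring R\<^esub> r) (resW M) (resW M)"
proof -
  interpret UP: ring "poly_ring R" using univ_poly_is_ring[OF carrier_is_subring] .
  have ac: "a \<in> carrier (poly_ring R)" using a unfolding resW_def by simp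
  show ?thesis
  proof (rule bij_betw_byWitness[where f'="\<lambda>r. (\<ominus>\<^bsub>poly_ring R\<^esub> a) \<oplus>\<^bsub>poly_ring R\<^esub> r"])
    show "\<forall>r\<in>resW M. (\<ominus>\<^bsub>poly_ring R\<^esub> a) \<oplus>\<^bsub>poly_ring R\<^esub> (a \<oplus>\<^bsub>poly_ring R\<^esub> r) = r"
    proof
      fix r assume "r \<in> resW M"
      then have "r \<in> carrier (poly_ring R)" unfolding resW_def by simp
      then show "(\<ominus>\<^bsub>poly_ring R\<^esub> a) \<oplus>\<^bsub>poly_ring R\<^esub> (a \<oplus>\<^bsub>poly_ring R\<^esub> r) = r"
        using ac by algebra
    qed
    show "\<forall>r\<in>resW M. a \<oplus>\<^bsub>poly_ring R\<^esub> ((\<ominus>\<^bsub>poly_ring R\<^esub> a) \<oplus>\<^bsub>poly_ring R\<^esub> r) = r"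
    proof
      fix r assume "r \<in> resW M"
      then have "r \<in> carrier (poly_ring R)" unfolding resW_def by simp
      then show "a \<oplus>\<^bsub>poly_ring R\<^esub> ((\<ominus>\<^bsub>poly_ring R\<^esub> a) \<oplus>\<^bsub>poly_ring R\<^esub> r) = r"
        using ac by algebra
    qed
    show "(\<lambda>r. a \<oplus>\<^bsub>poly_ring R\<^esub> r) ` resW M \<subseteq> resW M"
      using resW_add[OF a] by auto
    show "(\<lambda>r. (\<ominus>\<^bsub>poly_ring R\<^esub> a) \<oplus>\<^bsub>poly_ring R\<^esub> r) ` resW M \<subseteq> resW M"
      using resW_add[OF resW_neg[OF a]] by auto
  qed
qed

lemma char_sum_resW:
  assumes fin: "finite (carrier R)" and M: "M \<in> carrier (poly_ring R)" and d: "degree M \<ge> 1"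
    and chi: "dirichlet_char R M chi" and nt: "nontrivial_char R M chi"
  shows "(\<Sum>r\<in>resW M. chi r) = 0"
proof -
  interpret UP: domain "poly_ring R" using univ_poly_is_domain[OF carrier_is_subring] .
  obtain b where b: "b \<in> carrier (poly_ring R)" "pcoprime R b M" "chi b \<noteq> 1"
    using nt unfolding nontrivial_char_def by blast
  define f where "f = (\<lambda>r. (b \<otimes>\<^bsub>poly_ring R\<^esub> r) pmod M)"
  have W: "finite (resW M)" by (rule resW_finite[OF fin])
  have fW: "f ` resW M \<subseteq> resW M"
  proof
    fix y assume "y \<in> f ` resW M"
    then obtain r where r: "r \<in> resW M" "y = f r" by blast
    then have rc: "r \<in> carrier (poly_ring R)" unfolding resW_def by simp
    show "y \<in> resW M" unfolding r(2) f_def by (rule pmod_in_resW[OF UP.m_closed[OF b(1) rc] M d])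
  qed
  have inj: "inj_on f (resW M)"
  proof
    fix r s assume r: "r \<in> resW M" and s: "s \<in> resW M" and e: "f r = f s"
    have rc: "r \<in> carrier (poly_ring R)" and sc: "s \<in> carrier (poly_ring R)" using r s unfolding resW_def by auto
    have "M pdivides ((b \<otimes>\<^bsub>poly_ring R\<^esub> r) \<ominus>\<^bsub>poly_ring R\<^esub> (b \<otimes>\<^bsub>poly_ring R\<^esub> s))"
      using same_pmod_iff_pdivides[OF carrier_is_subfield UP.m_closed[OF b(1) rc] UP.m_closed[OF b(1) sc] M] e
      unfolding f_def by simp
    moreover have "(b \<otimes>\<^bsub>poly_ring R\<^esub> r) \<ominus>\<^bsub>poly_ring R\<^esub> (b \<otimes>\<^bsub>poly_ring R\<^esub> s) = b \<otimes>\<^bsub>poly_ring R\<^esub> (r \<ominus>\<^bsub>poly_ring R\<^esub> s)"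
      using b(1) rc sc by algebra
    ultimately have "M pdivides (b \<otimes>\<^bsub>poly_ring R\<^esub> (r \<ominus>\<^bsub>poly_ring R\<^esub> s))" by simp
    then have "M pdivides (r \<ominus>\<^bsub>poly_ring R\<^esub> s)"
      by (rule cancel_coprime[OF b(1) M UP.minus_closed[OF rc sc] b(2)])
    then have "r pmod M = s pmod M"
      using same_pmod_iff_pdivides[OF carrier_is_subfield rc sc M] by simp
    then show "r = s" using resW_pmod[OF r M] resW_pmod[OF s M] by simp
  qed
  have img: "f ` resW M = resW M" using endo_inj_surj[OF W fW inj] .
  have "(\<Sum>r\<in>resW M. chi r) = (\<Sum>r\<in>resW M. chi (f r))"
    using sum.reindex[OF inj, of chi] img by simp
  also have "\<dots> = (\<Sum>r\<in>resW M. chi b * chi r)"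
  proof (intro sum.cong refl)
    fix r assume r: "r \<in> resW M"
    then have rc: "r \<in> carrier (poly_ring R)" unfolding resW_def by simp
    have "chi (f r) = chi (b \<otimes>\<^bsub>poly_ring R\<^esub> r)"
      unfolding f_def by (rule chi_pmod[OF chi UP.m_closed[OF b(1) rc] M d])
    also have "\<dots> = chi b * chi r" using chi b(1) rc unfolding dirichlet_char_def by blast
    finally show "chi (f r) = chi b * chi r" .
  qed
  also have "\<dots> = chi b * (\<Sum>r\<in>resW M. chi r)" by (simp add: sum_distrib_left)
  finally have "(\<Sum>r\<in>resW M. chi r) = chi b * (\<Sum>r\<in>resW M. chi r)" .
  then have "(1 - chi b) * (\<Sum>r\<in>resW M. chi r) = 0" by (simp add: left_diff_distrib)
  then show ?thesis using b(3) by simp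
qed


lemma monic_shift:
  assumes a: "a \<in> monic_polys R n" and r: "r \<in> carrier (poly_ring R)" and dr: "degree r < n"
  shows "a \<oplus>\<^bsub>poly_ring R\<^esub> r \<in> monic_polys R n"
proof -
  interpret UP: ring "poly_ring R" using univ_poly_is_ring[OF carrier_is_subring] .
  have ac: "a \<in> carrier (poly_ring R)" and an: "a \<noteq> []" and al: "lead_coeff a = \<one>" and ad: "degree a = n"
    using a unfolding monic_polys_def by auto
  have pa: "polynomial (carrier R) a" and pr: "polynomial (carrier R) r"
    using ac r unfolding univ_poly_carrier by auto
  have sa: "set a \<subseteq> carrier R" and sr: "set r \<subseteq> carrier R" using pa pr polynomial_incl by auto
  have e: "a \<oplus>\<^bsub>poly_ring R\<^esub> r = poly_add a r" by (simp add: univ_poly_add)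
  have len: "length a \<noteq> length r" using dr ad an by auto
  have l: "length (poly_add a r) = length a"
    using poly_add_length_eq[OF carrier_is_subring pa pr len] len dr ad an by auto
  have ne: "poly_add a r \<noteq> []" using l an by auto
  have dg: "degree (poly_add a r) = n" using l ad by simp
  have "lead_coeff (poly_add a r) = coeff (poly_add a r) (degree (poly_add a r))"
    using lead_coeff_simp[OF ne] by simp
  also have "\<dots> = coeff a n \<oplus> coeff r n" unfolding dg poly_add_coeff[OF sa sr] by simp
  also have "coeff a n = \<one>" using lead_coeff_simp[OF an] al ad by simp
  also have "coeff r n = \<zero>" using coeff_degree[OF dr] .
  finally have lc: "lead_coeff (poly_add a r) = \<one>" by simp
  have "a \<oplus>\<^bsub>poly_ring R\<^esub> r \<in> carrier (poly_ring R)" using ac r by simp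
  then show ?thesis unfolding monic_polys_def using e ne dg lc by simp
qed

lemma monic_finite:
  assumes "finite (carrier R)"
  shows "finite (monic_polys R n)"
proof (rule finite_subset)
  show "monic_polys R n \<subseteq> {xs. set xs \<subseteq> carrier R \<and> length xs \<le> n + 1}"
  proof
    fix p assume "p \<in> monic_polys R n"
    then have "polynomial (carrier R) p" "degree p = n"
      unfolding monic_polys_def univ_poly_carrier by auto
    then show "p \<in> {xs. set xs \<subseteq> carrier R \<and> length xs \<le> n + 1}"
      using polynomial_incl by auto
  qed
  show "finite {xs. set xs \<subseteq> carrier R \<and> length xs \<le> n + 1}"
    using finite_lists_length_le[OF assms] .
qed

lemma L_coeff_vanish:
  assumes fin: "finite (carrier R)" and M: "M \<in> carrier (poly_ring R)" and d: "degree M \<ge> 1"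
    and chi: "dirichlet_char R M chi" and nt: "nontrivial_char R M chi" and n: "n \<ge> degree M"
  shows "L_coeff R chi n = 0"
proof -
  interpret UP: ring "poly_ring R" using univ_poly_is_ring[OF carrier_is_subring] .
  define S where "S = (\<Sum>a\<in>monic_polys R n. chi a)"
  have W: "finite (resW M)" by (rule resW_finite[OF fin])
  have mf: "finite (monic_polys R n)" by (rule monic_finite[OF fin])
  have shift: "S = (\<Sum>a\<in>monic_polys R n. chi (a \<oplus>\<^bsub>poly_ring R\<^esub> r))" if r: "r \<in> resW M" for r
  proof -
    have rc: "r \<in> carrier (poly_ring R)" and rd: "degree r < n" using r n unfolding resW_def by auto
    have nr: "\<ominus>\<^bsub>poly_ring R\<^esub> r \<in> resW M" by (rule resW_neg[OF r])
    have nrc: "\<ominus>\<^bsub>poly_ring R\<^esub> r \<in> carrier (poly_ring R)" and nrd: "degree (\<ominus>\<^bsub>poly_ring R\<^esub> r) < n"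
      using nr n unfolding resW_def by auto
    have bij: "bij_betw (\<lambda>a. a \<oplus>\<^bsub>poly_ring R\<^esub> r) (monic_polys R n) (monic_polys R n)"
    proof (rule bij_betw_byWitness[where f'="\<lambda>a. a \<oplus>\<^bsub>poly_ring R\<^esub> (\<ominus>\<^bsub>poly_ring R\<^esub> r)"])
      show "\<forall>a\<in>monic_polys R n. a \<oplus>\<^bsub>poly_ring R\<^esub> r \<oplus>\<^bsub>poly_ring R\<^esub> (\<ominus>\<^bsub>poly_ring R\<^esub> r) = a"
      proof
        fix a assume "a \<in> monic_polys R n"
        then have "a \<in> carrier (poly_ring R)" unfolding monic_polys_def by simp
        then show "a \<oplus>\<^bsub>poly_ring R\<^esub> r \<oplus>\<^bsub>poly_ring R\<^esub> (\<ominus>\<^bsub>poly_ring R\<^esub> r) = a"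
          using rc by algebra
      qed
      show "\<forall>a\<in>monic_polys R n. a \<oplus>\<^bsub>poly_ring R\<^esub> (\<ominus>\<^bsub>poly_ring R\<^esub> r) \<oplus>\<^bsub>poly_ring R\<^esub> r = a"
      proof
        fix a assume "a \<in> monic_polys R n"
        then have "a \<in> carrier (poly_ring R)" unfolding monic_polys_def by simp
        then show "a \<oplus>\<^bsub>poly_ring R\<^esub> (\<ominus>\<^bsub>poly_ring R\<^esub> r) \<oplus>\<^bsub>poly_ring R\<^esub> r = a"
          using rc by algebra
      qed
      show "(\<lambda>a. a \<oplus>\<^bsub>poly_ring R\<^esub> r) ` monic_polys R n \<subseteq> monic_polys R n"
        using monic_shift[OF _ rc rd] by blast
      show "(\<lambda>a. a \<oplus>\<^bsub>poly_ring R\<^esub> (\<ominus>\<^bsub>poly_ring R\<^esub> r)) ` monic_polys R n \<subseteq> monic_polys R n"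
        using monic_shift[OF _ nrc nrd] by blast
    qed
    show ?thesis unfolding S_def using sum.reindex_bij_betw[OF bij, of chi] by simp
  qed
  have inner: "(\<Sum>r\<in>resW M. chi (a \<oplus>\<^bsub>poly_ring R\<^esub> r)) = 0" if a: "a \<in> monic_polys R n" for a
  proof -
    have ac: "a \<in> carrier (poly_ring R)" using a unfolding monic_polys_def by simp
    define a0 where "a0 = a pmod M"
    have a0W: "a0 \<in> resW M" unfolding a0_def by (rule pmod_in_resW[OF ac M d])
    have a0c: "a0 \<in> carrier (poly_ring R)" using a0W unfolding resW_def by simp
    have am: "a pmod M = a0 pmod M" using resW_pmod[OF a0W M] by (simp add: a0_def)
    have "(\<Sum>r\<in>resW M. chi (a \<oplus>\<^bsub>poly_ring R\<^esub> r)) = (\<Sum>r\<in>resW M. chi (a0 \<oplus>\<^bsub>poly_ring R\<^esub> r))"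
    proof (intro sum.cong refl)
      fix r assume r: "r \<in> resW M"
      then have rc: "r \<in> carrier (poly_ring R)" unfolding resW_def by simp
      have "(a \<oplus>\<^bsub>poly_ring R\<^esub> r) pmod M = (a0 \<oplus>\<^bsub>poly_ring R\<^esub> r) pmod M"
        using long_division_add_iff[OF carrier_is_subfield ac a0c rc M] am by simp
      then show "chi (a \<oplus>\<^bsub>poly_ring R\<^esub> r) = chi (a0 \<oplus>\<^bsub>poly_ring R\<^esub> r)"
        by (rule chi_cong[OF chi UP.a_closed[OF ac rc] UP.a_closed[OF a0c rc] M])
    qed
    also have "\<dots> = (\<Sum>r\<in>resW M. chi r)"
      using sum.reindex_bij_betw[OF resW_shift_bij[OF a0W], of chi] by simp
    also have "\<dots> = 0" by (rule char_sum_resW[OF fin M d chi nt])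
    finally show ?thesis .
  qed
  have "of_nat (card (resW M)) * S = (\<Sum>r\<in>resW M. S)" by simp
  also have "\<dots> = (\<Sum>r\<in>resW M. \<Sum>a\<in>monic_polys R n. chi (a \<oplus>\<^bsub>poly_ring R\<^esub> r))"
    using shift by (intro sum.cong) auto
  also have "\<dots> = (\<Sum>a\<in>monic_polys R n. \<Sum>r\<in>resW M. chi (a \<oplus>\<^bsub>poly_ring R\<^esub> r))"
    by (rule sum.swap)
  also have "\<dots> = 0" using inner by simp
  finally have "of_nat (card (resW M)) * S = 0" .
  moreover have "card (resW M) \<noteq> 0" using W zero_in_resW[OF d] by auto
  ultimately have "S = 0" by simp
  then show ?thesis unfolding L_coeff_def S_def .
qed

lemma L_coeff_zero:
  assumes M: "M \<in> carrier (poly_ring R)" and chi: "dirichlet_char R M chi"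
  shows "L_coeff R chi 0 = 1"
proof -
  interpret UP: cring "poly_ring R" using univ_poly_is_cring[OF carrier_is_subring] .
  have one: "\<one>\<^bsub>poly_ring R\<^esub> = [\<one>]" by (simp add: univ_poly_one)
  have mon: "monic_polys R 0 = {[\<one>]}"
  proof
    show "monic_polys R 0 \<subseteq> {[\<one>]}"
    proof
      fix p assume "p \<in> monic_polys R 0"
      then have "p \<noteq> []" "hd p = \<one>" "length p - 1 = 0" unfolding monic_polys_def by auto
      then show "p \<in> {[\<one>]}" by (cases p) auto
    qed
    have "[\<one>] \<in> carrier (poly_ring R)" using UP.one_closed one by simp
    then show "{[\<one>]} \<subseteq> monic_polys R 0" unfolding monic_polys_def by simp
  qed
  have oc: "\<one>\<^bsub>poly_ring R\<^esub> \<in> carrier (poly_ring R)" by simp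
  have cop: "pcoprime R \<one>\<^bsub>poly_ring R\<^esub> M"
    unfolding pcoprime_def pdivides_def using UP.divides_one by blast
  have nz: "chi \<one>\<^bsub>poly_ring R\<^esub> \<noteq> 0" using chi oc cop unfolding dirichlet_char_def by blast
  have "chi \<one>\<^bsub>poly_ring R\<^esub> = chi (\<one>\<^bsub>poly_ring R\<^esub> \<otimes>\<^bsub>poly_ring R\<^esub> \<one>\<^bsub>poly_ring R\<^esub>)" by simp
  also have "\<dots> = chi \<one>\<^bsub>poly_ring R\<^esub> * chi \<one>\<^bsub>poly_ring R\<^esub>" using chi oc unfolding dirichlet_char_def by blast
  finally have "chi \<one>\<^bsub>poly_ring R\<^esub> = 1" using nz by (metis mult_cancel_left1)
  then show ?thesis unfolding L_coeff_def mon one by simp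
qed

end


lemma gamma_props:
  fixes Z :: "complex set" and s :: real and S :: "real set"
  assumes fin: "finite Z" and mdA: "\<forall>\<alpha>\<in>Z. cmod \<alpha> = s" and nrA: "\<forall>\<alpha>\<in>Z. Im \<alpha> \<noteq> 0"
    and S_def: "S = {\<bar>Arg a - Arg b\<bar> | a b. a \<in> Z \<and> b \<in> Z \<and> a \<noteq> b}
              \<union> {\<bar>Arg a\<bar> | a. a \<in> Z} \<union> {\<bar>pi - Arg a\<bar> | a. a \<in> Z}"
  shows "0 < (if S = {} then 1 else Min S)"
    and "\<And>\<alpha> \<beta>. \<alpha> \<in> Z \<Longrightarrow> \<beta> \<in> Z \<Longrightarrow> \<alpha> \<noteq> \<beta> \<Longrightarrow> (if S = {} then 1 else Min S) / 4 \<le> cmod (1 - \<alpha> / \<beta>)"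
proof -
  have md: "cmod \<alpha> = s" if "\<alpha> \<in> Z" for \<alpha> using mdA that by blast
  have nr: "Im \<alpha> \<noteq> 0" if "\<alpha> \<in> Z" for \<alpha> using nrA that by blast
  have real_arg: "Arg a \<noteq> 0 \<and> Arg a \<noteq> pi" if "a \<in> Z" for a
  proof -
    have "a \<notin> \<real>" using nr[OF that] by (simp add: complex_is_Real_iff)
    then show ?thesis using Arg_eq_0_pi[of a] by blast
  qed
  have fS: "finite S"
  proof -
    have "{\<bar>Arg a - Arg b\<bar> | a b. a \<in> Z \<and> b \<in> Z \<and> a \<noteq> b} \<subseteq> {\<bar>Arg a - Arg b\<bar> | a b. a \<in> Z \<and> b \<in> Z}" by blast
    moreover have "finite {\<bar>Arg a - Arg b\<bar> | a b. a \<in> Z \<and> b \<in> Z}"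
      using finite_image_set2[of "\<lambda>a. a \<in> Z" "\<lambda>b. b \<in> Z" "\<lambda>a b. \<bar>Arg a - Arg b\<bar>"] fin by simp
    ultimately have "finite {\<bar>Arg a - Arg b\<bar> | a b. a \<in> Z \<and> b \<in> Z \<and> a \<noteq> b}" by (rule finite_subset)
    moreover have "finite {\<bar>Arg a\<bar> | a. a \<in> Z}" using fin by simp
    moreover have "finite {\<bar>pi - Arg a\<bar> | a. a \<in> Z}" using fin by simp
    ultimately show ?thesis unfolding S_def by blast
  qed
  have pos: "0 < x" if xS: "x \<in> S" for x
  proof -
    consider (a) a b where "a \<in> Z" "b \<in> Z" "a \<noteq> b" "x = \<bar>Arg a - Arg b\<bar>"
      | (b) a where "a \<in> Z" "x = \<bar>Arg a\<bar>" | (c) a where "a \<in> Z" "x = \<bar>pi - Arg a\<bar>"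
      using xS unfolding S_def by blast
    then show ?thesis
    proof cases
      case (a a b)
      have "Arg a \<noteq> Arg b"
      proof
        assume e: "Arg a = Arg b"
        have "a = rcis (cmod a) (Arg a)" by (simp add: rcis_cmod_Arg)
        also have "\<dots> = rcis (cmod b) (Arg b)" using e md[OF a(1)] md[OF a(2)] by simp
        also have "\<dots> = b" by (simp add: rcis_cmod_Arg)
        finally show False using a(3) by simp
      qed
      then show ?thesis using a(4) by simp
    next
      case (b a) then show ?thesis using real_arg[of a] by simp
    next
      case (c a) then show ?thesis using real_arg[of a] by simp
    qed
  qed
  show "0 < (if S = {} then 1 else Min S)"
    using pos Min_in[OF fS] by auto
  fix \<alpha> \<beta> assume al: "\<alpha> \<in> Z" and be: "\<beta> \<in> Z" and ne: "\<alpha> \<noteq> \<beta>"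
  have m1: "\<bar>Arg \<alpha> - Arg \<beta>\<bar> \<in> S" unfolding S_def using al be ne by blast
  have m2: "\<bar>pi - Arg \<alpha>\<bar> \<in> S" unfolding S_def using al by blast
  have m3: "\<bar>pi - Arg \<beta>\<bar> \<in> S" unfolding S_def using be by blast
  have Sne: "S \<noteq> {}" using m1 by blast
  have g0: "0 < Min S" using pos Min_in[OF fS Sne] by auto
  have "Min S / 4 \<le> cmod (1 - \<alpha> / \<beta>)"
  proof (rule sep_bound)
    show "cmod \<alpha> = cmod \<beta>" using md[OF al] md[OF be] by simp
    show "\<beta> \<noteq> 0" using nr[OF be] by auto
    show "0 < Min S" by (rule g0)
    show "Min S \<le> \<bar>Arg \<alpha> - Arg \<beta>\<bar>" by (rule Min_le[OF fS m1])
    show "Min S \<le> \<bar>pi - Arg \<alpha>\<bar>" by (rule Min_le[OF fS m2])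
    show "Min S \<le> \<bar>pi - Arg \<beta>\<bar>" by (rule Min_le[OF fS m3])
  qed
  then show "(if S = {} then 1 else Min S) / 4 \<le> cmod (1 - \<alpha> / \<beta>)" using Sne by simp
qed

lemma zeros_facts:
  fixes R :: "'a ring" and M :: "'a list" and chi
  assumes fR: "field R" and fin: "finite (carrier R)" and Mc: "M \<in> carrier (poly_ring R)"
    and d: "degree M \<ge> 1" and chi: "dirichlet_char R M chi" and nt: "nontrivial_char R M chi"
  shows "finite (inv_zeros R chi)" and "(\<Sum>\<alpha>\<in>inv_zeros R chi. zmult R chi \<alpha>) \<le> degree M"
proof -
  define c where "c = L_coeff R chi"
  have c0: "c 0 \<noteq> 0" using L_coeff_zero[OF fR Mc chi] by (simp add: c_def)
  have cd: "c n = 0" if "n \<ge> degree M" for n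
    using L_coeff_vanish[OF fR fin Mc d chi nt that] by (simp add: c_def)
  have Lf: "Lfun R chi = (\<lambda>u. \<Sum>n. c n * u ^ n)" by (simp add: Lfun_def c_def fun_eq_iff)
  note zc = zeros_count[of c "degree M", OF c0 cd]
  define N where "N = {z. (\<Sum>n. c n * z ^ n) = 0}"
  have sub: "(\<lambda>\<alpha>. 1 / \<alpha>) ` inv_zeros R chi \<subseteq> N"
    unfolding N_def inv_zeros_def Lf by auto
  have inj: "inj_on (\<lambda>\<alpha>. 1 / \<alpha>) (inv_zeros R chi)"
    by (rule inj_onI) (simp add: field_simps)
  have fN: "finite N" using zc(1) by (simp add: N_def)
  have "finite ((\<lambda>\<alpha>. 1 / \<alpha>) ` inv_zeros R chi)" using finite_subset[OF sub fN] .
  then show fZ: "finite (inv_zeros R chi)" using finite_imageD[OF _ inj] by blast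
  have "(\<Sum>\<alpha>\<in>inv_zeros R chi. zmult R chi \<alpha>) = (\<Sum>\<alpha>\<in>inv_zeros R chi. nat (zorder (\<lambda>u. \<Sum>n. c n * u ^ n) (1 / \<alpha>)))"
    by (simp add: zmult_def Lf)
  also have "\<dots> = (\<Sum>z\<in>(\<lambda>\<alpha>. 1 / \<alpha>) ` inv_zeros R chi. nat (zorder (\<lambda>u. \<Sum>n. c n * u ^ n) z))"
    by (rule sum.reindex[OF inj, symmetric, unfolded comp_def])
  also have "\<dots> \<le> (\<Sum>z\<in>N. nat (zorder (\<lambda>u. \<Sum>n. c n * u ^ n) z))"
    by (rule sum_mono2[OF fN sub]) simp
  also have "\<dots> \<le> degree M" using zc(2) by (simp add: N_def)
  finally show "(\<Sum>\<alpha>\<in>inv_zeros R chi. zmult R chi \<alpha>) \<le> degree M" .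
qed

theorem lemma5p7:
  "\<exists>C::real. \<forall>(R::'a ring) M chi k n.
     field R \<longrightarrow> finite (carrier R) \<longrightarrow>
     M \<in> carrier (poly_ring R) \<longrightarrow> degree M \<ge> 1 \<longrightarrow>
     dirichlet_char R M chi \<longrightarrow> nontrivial_char R M chi \<longrightarrow>
     k \<ge> 2 \<longrightarrow> n \<ge> 2 \<longrightarrow>
     cmod ((\<Sum>n1 = 1..n - 1. Zfun R chi (k - 1) n1 * Zfun R chi 1 (n - n1))
           - (-1) ^ k * of_nat k / of_nat (fact (k - 1)) *
             (\<Sum>\<alpha> \<in> inv_zeros R chi. of_nat (zmult R chi \<alpha>) ^ k * \<alpha> ^ n *
                of_real (ln (real n)) ^ (k - 1) / of_nat n))
       \<le> real k / real (fact (k - 1)) *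
         (C * real (degree M) ^ k * (real k + 1 / gamma_chi R chi) *
          real (fq_card R) powr (real n / 2) * ln (real n) ^ (k - 2) / real n)"
proof (intro exI[of _ 40] allI impI)
  fix R :: "'a ring" and M :: "'a list" and chi :: "'a list \<Rightarrow> complex" and k n :: nat
  assume fR: "field R" and fin: "finite (carrier R)" and Mc: "M \<in> carrier (poly_ring R)"
    and d: "degree M \<ge> 1" and chi: "dirichlet_char R M chi" and nt: "nontrivial_char R M chi"
    and k: "k \<ge> 2" and n: "n \<ge> 2"
  define Z where "Z = inv_zeros R chi"
  define q where "q = real (fq_card R)"
  define s where "s = sqrt q"
  have q0: "q > 0"
  proof -
    interpret field R by (rule fR)
    have "carrier R \<noteq> {}" using one_closed by blast
    then show ?thesis using fin by (simp add: q_def fq_card_def card_gt_0_iff)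
  qed
  have s0: "s > 0" using q0 by (simp add: s_def)
  have fZ: "finite Z" unfolding Z_def by (rule zeros_facts(1)[OF fR fin Mc d chi nt])
  have ms: "(\<Sum>\<alpha>\<in>Z. zmult R chi \<alpha>) \<le> degree M" unfolding Z_def by (rule zeros_facts(2)[OF fR fin Mc d chi nt])
  have md: "cmod \<alpha> = s" if "\<alpha> \<in> Z" for \<alpha> using that by (simp add: Z_def inv_zeros_def s_def q_def)
  have nr: "Im \<alpha> \<noteq> 0" if "\<alpha> \<in> Z" for \<alpha> using that by (simp add: Z_def inv_zeros_def)
  have mdA: "\<forall>\<alpha>\<in>Z. cmod \<alpha> = s" using md by blast
  have nrA: "\<forall>\<alpha>\<in>Z. Im \<alpha> \<noteq> 0" using nr by blast
  note gp = gamma_props[OF fZ mdA nrA refl]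
  have geq: "gamma_chi R chi = (if ({\<bar>Arg a - Arg b\<bar> | a b. a \<in> Z \<and> b \<in> Z \<and> a \<noteq> b}
              \<union> {\<bar>Arg a\<bar> | a. a \<in> Z} \<union> {\<bar>pi - Arg a\<bar> | a. a \<in> Z}) = {} then 1 else
              Min ({\<bar>Arg a - Arg b\<bar> | a b. a \<in> Z \<and> b \<in> Z \<and> a \<noteq> b}
              \<union> {\<bar>Arg a\<bar> | a. a \<in> Z} \<union> {\<bar>pi - Arg a\<bar> | a. a \<in> Z}))"
    by (simp add: gamma_chi_def Z_def Let_def)
  have g0: "gamma_chi R chi > 0" unfolding geq by (rule gp(1))
  have sep: "gamma_chi R chi / 4 \<le> cmod (1 - \<alpha> / \<beta>)" if "\<alpha> \<in> Z" "\<beta> \<in> Z" "\<alpha> \<noteq> \<beta>" for \<alpha> \<beta>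
    unfolding geq by (rule gp(2)[OF that])
  have Zf: "\<And>l i. Zfun R chi l i = (-1) ^ l / of_nat (fact (l - 1)) *
     (\<Sum>\<alpha> \<in> Z. of_nat (zmult R chi \<alpha>) ^ l * \<alpha> ^ i * of_real (ln (real i)) ^ (l - 1) / of_nat i)"
    by (simp add: Zfun_def Z_def)
  have main: "cmod ((\<Sum>n1 = 1..n - 1. Zfun R chi (k - 1) n1 * Zfun R chi 1 (n - n1))
           - (-1) ^ k * of_nat k / of_nat (fact (k - 1)) *
             (\<Sum>\<alpha> \<in> Z. of_nat (zmult R chi \<alpha>) ^ k * \<alpha> ^ n *
                of_real (ln (real n)) ^ (k - 1) / of_nat n))
       \<le> real k / real (fact (k - 1)) *
         (40 * real (degree M) ^ k * (real k + 1 / gamma_chi R chi) * s ^ n * ln (real n) ^ (k - 2) / real n)"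
    by (rule main_abstract[OF fZ _ s0 ms g0 _ k n Zf]) (erule md, (rule sep; assumption))
  have sq: "s ^ n = real (fq_card R) powr (real n / 2)"
  proof -
    have "q powr (real n / 2) = sqrt (q powr real n)" using q0 by (simp add: powr_half_sqrt_powr)
    also have "\<dots> = sqrt (q ^ n)" using q0 by (simp add: powr_realpow)
    also have "\<dots> = s ^ n" by (simp add: s_def real_sqrt_power)
    finally show ?thesis by (simp add: q_def)
  qed
  show "cmod ((\<Sum>n1 = 1..n - 1. Zfun R chi (k - 1) n1 * Zfun R chi 1 (n - n1))
           - (-1) ^ k * of_nat k / of_nat (fact (k - 1)) *
             (\<Sum>\<alpha> \<in> inv_zeros R chi. of_nat (zmult R chi \<alpha>) ^ k * \<alpha> ^ n *
                of_real (ln (real n)) ^ (k - 1) / of_nat n))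
       \<le> real k / real (fact (k - 1)) *
         (40 * real (degree M) ^ k * (real k + 1 / gamma_chi R chi) *
          real (fq_card R) powr (real n / 2) * ln (real n) ^ (k - 2) / real n)"
    using main unfolding Z_def sq .
qed

end
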